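(* Let $Z=\{Z_t:t\ge0\}$ be a continuous fractional Brownian motion with Hurst parameter $H\in(0,1)$. For $\alpha>0$ let $Y^{(\alpha)}_t:=\int_0^t\mathrm{e}^{-\alpha s}\,dZ_{a(s,\alpha)}$ with $a(s,\alpha):=H\mathrm{e}^{\alpha s/H}/\alpha$ (pathwise Riemann–Stieltjes integral). For $\gamma>0$ let $$U^{(D,\gamma)}_t:=\mathrm{e}^{-\gamma t}\int_{-\infty}^t \mathrm{e}^{(\gamma-1)s}\,dZ_{a(s,1)},\quad t\in\mathbf{R},$$ where the integral over $(-\infty,t]$ is the almost sure limit as $T\to-\infty$ of the Riemann–Stieltjes integrals over $[T,t]$. Then the sample paths of $Y^{(\alpha)}$ and of $U^{(D,\gamma)}$ are locally Hölder continuous of every order $\beta<H$.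
   Context: A fractional Brownian motion with Hurst parameter $H\in(0,1)$ is a centered Gaussian process on $[0,\infty)$ with covariance $\frac12(t^{2H}+s^{2H}-|t-s|^{2H})$; a continuous version is taken. The process $U^{(D,\gamma)}$ is the stationary solution of the Langevin equation $dU_t=-\gamma U_t\,dt+dY^{(1)}_t$. *)

theory Defs
  imports "HOL-Probability.Probability"
begin

definition centered_gaussian_process ::
  "'a measure \<Rightarrow> real set \<Rightarrow> (real \<Rightarrow> real \<Rightarrow> real) \<Rightarrow> (real \<Rightarrow> 'a \<Rightarrow> real) \<Rightarrow> bool" where
  "centered_gaussian_process M T K X \<longleftrightarrow>
     prob_space M \<and>
     (\<forall>t\<in>T. X t \<in> borel_measurable M) \<and>
     (\<forall>(n::nat) (ts::nat \<Rightarrow> real) (c::nat \<Rightarrow> real). (\<forall>i<n. ts i \<in> T) \<longrightarrow>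
        (let v = (\<Sum>i<n. \<Sum>j<n. c i * c j * K (ts i) (ts j)) in
          (if v > 0
           then distributed M lborel (\<lambda>\<omega>. \<Sum>i<n. c i * X (ts i) \<omega>) (normal_density 0 (sqrt v))
           else (AE \<omega> in M. (\<Sum>i<n. c i * X (ts i) \<omega>) = 0))))"

definition fbm_cov :: "real \<Rightarrow> real \<Rightarrow> real \<Rightarrow> real" where
  "fbm_cov H t s = (t powr (2*H) + s powr (2*H) - \<bar>t - s\<bar> powr (2*H)) / 2"

definition continuous_fbm :: "'a measure \<Rightarrow> real \<Rightarrow> (real \<Rightarrow> 'a \<Rightarrow> real) \<Rightarrow> bool" where
  "continuous_fbm M H Z \<longleftrightarrow>
     centered_gaussian_process M {0..} (fbm_cov H) Z \<and>
     (\<forall>\<omega>\<in>space M. continuous_on {0..} (\<lambda>t. Z t \<omega>))"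

definition has_RS_integral ::
  "(real \<Rightarrow> real) \<Rightarrow> (real \<Rightarrow> real) \<Rightarrow> real \<Rightarrow> real \<Rightarrow> real \<Rightarrow> bool" where
  "has_RS_integral f g a b I \<longleftrightarrow>
     (\<forall>e>0. \<exists>d>0. \<forall>(n::nat) (x::nat \<Rightarrow> real) (\<xi>::nat \<Rightarrow> real).
        (x 0 = a \<and> x n = b \<and>
         (\<forall>i<n. x i < x (Suc i) \<and> x (Suc i) - x i < d \<and> x i \<le> \<xi> i \<and> \<xi> i \<le> x (Suc i)))
        \<longrightarrow> \<bar>(\<Sum>i<n. f (\<xi> i) * (g (x (Suc i)) - g (x i))) - I\<bar> < e)"

definition RS_integral :: "(real \<Rightarrow> real) \<Rightarrow> (real \<Rightarrow> real) \<Rightarrow> real \<Rightarrow> real \<Rightarrow> real" where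
  "RS_integral f g a b = (THE I. has_RS_integral f g a b I)"

definition time_change :: "real \<Rightarrow> real \<Rightarrow> real \<Rightarrow> real" where
  "time_change H s \<alpha> = H * exp (\<alpha> * s / H) / \<alpha>"

definition Y_proc :: "real \<Rightarrow> (real \<Rightarrow> 'a \<Rightarrow> real) \<Rightarrow> real \<Rightarrow> real \<Rightarrow> 'a \<Rightarrow> real" where
  "Y_proc H Z \<alpha> t \<omega> =
     RS_integral (\<lambda>s. exp (- \<alpha> * s)) (\<lambda>s. Z (time_change H s \<alpha>) \<omega>) 0 t"

definition U_partial :: "real \<Rightarrow> (real \<Rightarrow> 'a \<Rightarrow> real) \<Rightarrow> real \<Rightarrow> real \<Rightarrow> real \<Rightarrow> 'a \<Rightarrow> real" where
  "U_partial H Z \<gamma> T t \<omega> =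
     RS_integral (\<lambda>s. exp ((\<gamma> - 1) * s)) (\<lambda>s. Z (time_change H s 1) \<omega>) T t"

definition U_proc :: "real \<Rightarrow> (real \<Rightarrow> 'a \<Rightarrow> real) \<Rightarrow> real \<Rightarrow> real \<Rightarrow> 'a \<Rightarrow> real" where
  "U_proc H Z \<gamma> t \<omega> =
     exp (- \<gamma> * t) * Lim at_bot (\<lambda>T. U_partial H Z \<gamma> T t \<omega>)"

definition locally_holder_on :: "real set \<Rightarrow> real \<Rightarrow> (real \<Rightarrow> real) \<Rightarrow> bool" where
  "locally_holder_on S \<beta> f \<longleftrightarrow>
     (\<forall>a b. \<exists>C. \<forall>s\<in>S \<inter> {a..b}. \<forall>t\<in>S \<inter> {a..b}. \<bar>f s - f t\<bar> \<le> C * \<bar>s - t\<bar> powr \<beta>)"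

end

theory Submission
  imports Defs
begin

lemma incr_dist:
  assumes Z: "continuous_fbm M H Z" and "0 \<le> s" "0 \<le> t" "s \<noteq> t"
  shows "distributed M lborel (\<lambda>\<omega>. Z t \<omega> - Z s \<omega>) (normal_density 0 (\<bar>t - s\<bar> powr H))"
proof -
  have G: "centered_gaussian_process M {0..} (fbm_cov H) Z" using Z by (simp add: continuous_fbm_def)
  define ts where "ts = (\<lambda>i::nat. if i = 0 then t else s)"
  define c where "c = (\<lambda>i::nat. if i = 0 then (1::real) else -1)"
  have "\<forall>i<2. ts i \<in> {0..}" using assms by (auto simp: ts_def)
  with G have *: "let v = (\<Sum>i<2. \<Sum>j<2. c i * c j * fbm_cov H (ts i) (ts j)) in
          (if v > 0
           then distributed M lborel (\<lambda>\<omega>. \<Sum>i<2. c i * Z (ts i) \<omega>) (normal_density 0 (sqrt v))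
           else (AE \<omega> in M. (\<Sum>i<2. c i * Z (ts i) \<omega>) = 0))"
    unfolding centered_gaussian_process_def by blast
  have v: "(\<Sum>i<2. \<Sum>j<2. c i * c j * fbm_cov H (ts i) (ts j)) = \<bar>t - s\<bar> powr (2*H)"
    by (simp add: numeral_2_eq_2 lessThan_Suc ts_def c_def fbm_cov_def abs_minus_commute field_simps)
  have pos: "\<bar>t - s\<bar> powr (2*H) > 0" using assms by simp
  have sq: "sqrt (\<bar>t - s\<bar> powr (2*H)) = \<bar>t - s\<bar> powr H"
    by (simp add: powr_half_sqrt[symmetric] powr_powr)
  have f: "(\<lambda>\<omega>. \<Sum>i<2. c i * Z (ts i) \<omega>) = (\<lambda>\<omega>. Z t \<omega> - Z s \<omega>)"
    by (simp add: numeral_2_eq_2 lessThan_Suc ts_def c_def)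
  show ?thesis using * unfolding v f Let_def using pos sq by simp
qed



lemma ftc_exp:
  fixes c x y :: real
  assumes "x \<le> y"
  shows "((\<lambda>u. c * exp (c*u)) has_integral (exp (c*y) - exp (c*x))) {x..y}"
  using assms
  by (intro fundamental_theorem_of_calculus)
     (auto intro!: derivative_eq_intros simp: has_real_derivative_iff_has_vector_derivative[symmetric])

lemma RS_term:
  fixes g :: "real \<Rightarrow> real"
  assumes xy: "x \<le> \<xi>" "\<xi> \<le> y"
    and cont: "continuous_on {x..y} g"
    and eta: "\<And>u. u \<in> {x..y} \<Longrightarrow> \<bar>g u - g x\<bar> \<le> \<eta> \<and> \<bar>g u - g y\<bar> \<le> \<eta>"
    and K: "\<And>u. u \<in> {x..y} \<Longrightarrow> \<bar>c * exp (c*u)\<bar> \<le> K"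
    and "0 \<le> \<eta>" "0 \<le> K"
  shows "\<bar>exp (c*\<xi>) * (g y - g x) - (exp (c*y) * g y - exp (c*x) * g x - integral {x..y} (\<lambda>u. g u * (c * exp (c*u))))\<bar> \<le> \<eta> * K * (y - x)"
proof -
  define h where "h = (\<lambda>u. g u * (c * exp (c*u)))"
  have hc: "continuous_on {x..y} h" unfolding h_def
    by (intro continuous_intros cont)
  have hi: "h integrable_on {x..y}" using hc by (rule integrable_continuous_interval)
  have h1: "(h has_integral integral {x..\<xi>} h) {x..\<xi>}"
    using integrable_subinterval_real[OF hi, of x \<xi>] xy by (auto intro: integrable_integral)
  have h2: "(h has_integral integral {\<xi>..y} h) {\<xi>..y}"
    using integrable_subinterval_real[OF hi, of \<xi> y] xy by (auto intro: integrable_integral)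
  have comb: "integral {x..\<xi>} h + integral {\<xi>..y} h = integral {x..y} h"
    using Henstock_Kurzweil_Integration.integral_combine[OF xy hi] .
  have A: "((\<lambda>u. (g u - g x) * (c * exp (c*u))) has_integral
        (integral {x..\<xi>} h - g x * (exp (c*\<xi>) - exp (c*x)))) {x..\<xi>}"
  proof -
    have "((\<lambda>u. h u - g x * (c * exp (c*u))) has_integral
        (integral {x..\<xi>} h - g x * (exp (c*\<xi>) - exp (c*x)))) {x..\<xi>}"
      by (intro has_integral_diff h1 has_integral_mult_right ftc_exp xy)
    then show ?thesis by (simp add: h_def algebra_simps)
  qed
  have B: "((\<lambda>u. (g u - g y) * (c * exp (c*u))) has_integral
        (integral {\<xi>..y} h - g y * (exp (c*y) - exp (c*\<xi>)))) {\<xi>..y}"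
  proof -
    have "((\<lambda>u. h u - g y * (c * exp (c*u))) has_integral
        (integral {\<xi>..y} h - g y * (exp (c*y) - exp (c*\<xi>)))) {\<xi>..y}"
      by (intro has_integral_diff h2 has_integral_mult_right ftc_exp xy)
    then show ?thesis by (simp add: h_def algebra_simps)
  qed
  have bA: "norm (integral {x..\<xi>} h - g x * (exp (c*\<xi>) - exp (c*x))) \<le> \<eta> * K * Henstock_Kurzweil_Integration.content {x..\<xi>}"
  proof (rule has_integral_bound_real[OF _ _ A, where S="{}"])
    show "0 \<le> \<eta> * K" using assms by simp
    fix u assume "u \<in> {x..\<xi>} - {}"
    then have u: "u \<in> {x..y}" using xy by auto
    show "norm ((g u - g x) * (c * exp (c*u))) \<le> \<eta> * K"
      unfolding norm_mult real_norm_def using eta[OF u] K[OF u] assms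
      by (auto simp: abs_mult intro!: mult_mono)
  qed simp
  have bB: "norm (integral {\<xi>..y} h - g y * (exp (c*y) - exp (c*\<xi>))) \<le> \<eta> * K * Henstock_Kurzweil_Integration.content {\<xi>..y}"
  proof (rule has_integral_bound_real[OF _ _ B, where S="{}"])
    show "0 \<le> \<eta> * K" using assms by simp
    fix u assume "u \<in> {\<xi>..y} - {}"
    then have u: "u \<in> {x..y}" using xy by auto
    show "norm ((g u - g y) * (c * exp (c*u))) \<le> \<eta> * K"
      unfolding norm_mult real_norm_def using eta[OF u] K[OF u] assms
      by (auto simp: abs_mult intro!: mult_mono)
  qed simp
  have eq: "exp (c*\<xi>) * (g y - g x) - (exp (c*y) * g y - exp (c*x) * g x - integral {x..y} h)
      = (integral {x..\<xi>} h - g x * (exp (c*\<xi>) - exp (c*x))) + (integral {\<xi>..y} h - g y * (exp (c*y) - exp (c*\<xi>)))"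
    using comb by (simp add: algebra_simps)
  have "\<bar>exp (c*\<xi>) * (g y - g x) - (exp (c*y) * g y - exp (c*x) * g x - integral {x..y} h)\<bar>
     \<le> \<eta> * K * (\<xi> - x) + \<eta> * K * (y - \<xi>)"
    unfolding eq using bA bB xy by (simp add: content_real)
  also have "\<dots> = \<eta> * K * (y - x)" by (simp add: algebra_simps)
  finally show ?thesis unfolding h_def .
qed

lemma part_mono:
  fixes x :: "nat \<Rightarrow> real"
  assumes "\<forall>i<n. x i < x (Suc i)" "i \<le> j" "j \<le> n"
  shows "x i \<le> x j"
  using assms(2,3)
proof (induction j)
  case 0 then show ?case by simp
next
  case (Suc j)
  show ?case
  proof (cases "i = Suc j")
    case False
    then have "i \<le> j" using Suc by simp
    then have "x i \<le> x j" using Suc by simp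
    also have "x j < x (Suc j)" using assms(1) Suc by simp
    finally show ?thesis by simp
  qed simp
qed

lemma exp_bound_Icc:
  fixes c a b u :: real
  assumes "u \<in> {a..b}"
  shows "\<bar>c * exp (c*u)\<bar> \<le> \<bar>c\<bar> * (exp (c*a) + exp (c*b))"
proof -
  have "exp (c*u) \<le> exp (c*a) + exp (c*b)"
  proof (cases "c \<ge> 0")
    case True
    then have "c*u \<le> c*b" using assms by (auto intro: mult_left_mono)
    then show ?thesis by (smt (verit) exp_gt_zero exp_le_cancel_iff)
  next
    case False
    then have "c*u \<le> c*a" using assms by (auto intro: mult_left_mono_neg)
    then show ?thesis by (smt (verit) exp_gt_zero exp_le_cancel_iff)
  qed
  then show ?thesis by (simp add: abs_mult mult_left_mono)
qed

lemma has_RS_exp: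
  fixes g :: "real \<Rightarrow> real"
  assumes ab: "a \<le> b" and cont: "continuous_on {a..b} g"
  shows "has_RS_integral (\<lambda>s. exp (c * s)) g a b
     (exp (c*b) * g b - exp (c*a) * g a - integral {a..b} (\<lambda>u. g u * (c * exp (c*u))))"
  unfolding has_RS_integral_def
proof (intro allI impI)
  fix e :: real assume e: "e > 0"
  define h where "h = (\<lambda>u. g u * (c * exp (c*u)))"
  define K where "K = \<bar>c\<bar> * (exp (c*a) + exp (c*b))"
  have K0: "0 \<le> K" unfolding K_def by simp
  have Kb: "\<And>u. u \<in> {a..b} \<Longrightarrow> \<bar>c * exp (c*u)\<bar> \<le> K" unfolding K_def by (rule exp_bound_Icc)
  define \<eta> where "\<eta> = e / (2 * (K * (b - a) + 1))"
  have KD: "0 \<le> K * (b - a)" using K0 ab by simp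
  have \<eta>0: "\<eta> > 0" unfolding \<eta>_def using e KD by simp
  have uc: "uniformly_continuous_on {a..b} g"
    by (rule compact_uniformly_continuous[OF cont compact_Icc])
  then obtain d where d: "d > 0" and
    dd: "\<And>u v. u \<in> {a..b} \<Longrightarrow> v \<in> {a..b} \<Longrightarrow> dist v u < d \<Longrightarrow> dist (g v) (g u) < \<eta>"
    unfolding uniformly_continuous_on_def using \<eta>0 by metis
  have hi: "h integrable_on {a..b}" unfolding h_def
    by (intro integrable_continuous_interval continuous_intros cont)
  define F where "F = (\<lambda>t. exp (c*t) * g t - integral {a..t} h)"
  show "\<exists>d>0. \<forall>(n::nat) (x::nat \<Rightarrow> real) (\<xi>::nat \<Rightarrow> real).
        (x 0 = a \<and> x n = b \<and>
         (\<forall>i<n. x i < x (Suc i) \<and> x (Suc i) - x i < d \<and> x i \<le> \<xi> i \<and> \<xi> i \<le> x (Suc i)))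
        \<longrightarrow> \<bar>(\<Sum>i<n. exp (c * \<xi> i) * (g (x (Suc i)) - g (x i))) -
             (exp (c*b) * g b - exp (c*a) * g a - integral {a..b} (\<lambda>u. g u * (c * exp (c*u))))\<bar> < e"
  proof (intro exI[of _ d] conjI d allI impI)
    fix n :: nat and x \<xi> :: "nat \<Rightarrow> real"
    assume P: "x 0 = a \<and> x n = b \<and>
         (\<forall>i<n. x i < x (Suc i) \<and> x (Suc i) - x i < d \<and> x i \<le> \<xi> i \<and> \<xi> i \<le> x (Suc i))"
    have inc: "\<forall>i<n. x i < x (Suc i)" using P by blast
    have xin: "x i \<in> {a..b}" if "i \<le> n" for i
      using part_mono[OF inc, of 0 i] part_mono[OF inc, of i n] that P by auto
    have I: "exp (c*b) * g b - exp (c*a) * g a - integral {a..b} h = F (x n) - F (x 0)"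
      using P by (simp add: F_def)
    also have "\<dots> = (\<Sum>i<n. F (x (Suc i)) - F (x i))"
      by (rule sum_lessThan_telescope[symmetric])
    finally have I: "exp (c*b) * g b - exp (c*a) * g a - integral {a..b} h = (\<Sum>i<n. F (x (Suc i)) - F (x i))" .
    have termb: "\<bar>exp (c * \<xi> i) * (g (x (Suc i)) - g (x i)) - (F (x (Suc i)) - F (x i))\<bar>
        \<le> \<eta> * K * (x (Suc i) - x i)" if i: "i < n" for i
    proof -
      have xi: "x i \<in> {a..b}" "x (Suc i) \<in> {a..b}" using xin i by auto
      have sub: "{x i..x (Suc i)} \<subseteq> {a..b}" using xi by auto
      have FF: "F (x (Suc i)) - F (x i) = exp (c * x (Suc i)) * g (x (Suc i)) - exp (c * x i) * g (x i)
           - integral {x i..x (Suc i)} h"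
      proof -
        have "integral {a..x i} h + integral {x i..x (Suc i)} h = integral {a..x (Suc i)} h"
          using Henstock_Kurzweil_Integration.integral_combine[of a "x i" "x (Suc i)" h]
            integrable_subinterval_real[OF hi, of a "x (Suc i)"] xi P i by auto
        then show ?thesis unfolding F_def by (simp add: algebra_simps)
      qed
      have "\<bar>exp (c * \<xi> i) * (g (x (Suc i)) - g (x i)) - (exp (c * x (Suc i)) * g (x (Suc i)) - exp (c * x i) * g (x i)
           - integral {x i..x (Suc i)} h)\<bar> \<le> \<eta> * K * (x (Suc i) - x i)"
        unfolding h_def
      proof (rule RS_term)
        show "x i \<le> \<xi> i" "\<xi> i \<le> x (Suc i)" using P i by auto
        show "continuous_on {x i..x (Suc i)} g" using continuous_on_subset[OF cont sub] .
        show "0 \<le> \<eta>" "0 \<le> K" using \<eta>0 K0 by auto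
        fix u assume u: "u \<in> {x i..x (Suc i)}"
        then have ua: "u \<in> {a..b}" using sub by auto
        have m: "x (Suc i) - x i < d" using P i by auto
        show "\<bar>c * exp (c*u)\<bar> \<le> K" using Kb[OF ua] .
        have "dist (g u) (g (x i)) < \<eta>" using dd[OF xi(1) ua] u m by (auto simp: dist_real_def)
        moreover have "dist (g u) (g (x (Suc i))) < \<eta>" using dd[OF xi(2) ua] u m by (auto simp: dist_real_def)
        ultimately show "\<bar>g u - g (x i)\<bar> \<le> \<eta> \<and> \<bar>g u - g (x (Suc i))\<bar> \<le> \<eta>"
          by (simp add: dist_real_def)
      qed
      then show ?thesis unfolding FF .
    qed
    have "\<bar>(\<Sum>i<n. exp (c * \<xi> i) * (g (x (Suc i)) - g (x i))) - (\<Sum>i<n. F (x (Suc i)) - F (x i))\<bar>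
        = \<bar>\<Sum>i<n. exp (c * \<xi> i) * (g (x (Suc i)) - g (x i)) - (F (x (Suc i)) - F (x i))\<bar>"
      by (simp add: sum_subtractf)
    also have "\<dots> \<le> (\<Sum>i<n. \<bar>exp (c * \<xi> i) * (g (x (Suc i)) - g (x i)) - (F (x (Suc i)) - F (x i))\<bar>)"
      by (rule sum_abs)
    also have "\<dots> \<le> (\<Sum>i<n. \<eta> * K * (x (Suc i) - x i))"
      by (intro sum_mono termb) simp
    also have "\<dots> = \<eta> * K * (x n - x 0)"
      by (simp add: sum_distrib_left[symmetric] sum_lessThan_telescope)
    also have "\<dots> = \<eta> * (K * (b - a))" using P by simp
    also have "\<dots> < e"
    proof -
      have "\<eta> * (K * (b - a)) = e * (K * (b - a)) / (2 * (K * (b - a) + 1))"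
        unfolding \<eta>_def by simp
      also have "\<dots> < e"
      proof -
        have "e * (K * (b - a)) < e * (2 * (K * (b - a) + 1))" using e KD by (intro mult_strict_left_mono) auto
        then show ?thesis using KD by (simp add: divide_less_eq)
      qed
      finally show ?thesis .
    qed
    finally show "\<bar>(\<Sum>i<n. exp (c * \<xi> i) * (g (x (Suc i)) - g (x i))) -
             (exp (c*b) * g b - exp (c*a) * g a - integral {a..b} (\<lambda>u. g u * (c * exp (c*u))))\<bar> < e"
      using I unfolding h_def by simp
  qed
qed

lemma RS_unique:
  assumes ab: "a \<le> b" and I: "has_RS_integral f g a b I" and J: "has_RS_integral f g a b J"
  shows "I = J"
proof (rule ccontr)
  assume ne: "I \<noteq> J"
  define e where "e = \<bar>I - J\<bar> / 2"
  have e: "e > 0" using ne unfolding e_def by simp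
  obtain d1 where d1: "d1 > 0" and D1: "\<And>n x \<xi>. (x 0 = a \<and> x n = b \<and>
         (\<forall>i<n. x i < x (Suc i) \<and> x (Suc i) - x i < d1 \<and> x i \<le> \<xi> i \<and> \<xi> i \<le> x (Suc i)))
        \<Longrightarrow> \<bar>(\<Sum>i<n. f (\<xi> i) * (g (x (Suc i)) - g (x i))) - I\<bar> < e"
    using I e unfolding has_RS_integral_def by meson
  obtain d2 where d2: "d2 > 0" and D2: "\<And>n x \<xi>. (x 0 = a \<and> x n = b \<and>
         (\<forall>i<n. x i < x (Suc i) \<and> x (Suc i) - x i < d2 \<and> x i \<le> \<xi> i \<and> \<xi> i \<le> x (Suc i)))
        \<Longrightarrow> \<bar>(\<Sum>i<n. f (\<xi> i) * (g (x (Suc i)) - g (x i))) - J\<bar> < e"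
    using J e unfolding has_RS_integral_def by meson
  define d where "d = min d1 d2"
  have d: "d > 0" using d1 d2 by (simp add: d_def)
  obtain n x where P: "x 0 = a \<and> x n = b \<and>
         (\<forall>i<n. x i < x (Suc i) \<and> x (Suc i) - x i < d \<and> x i \<le> x i \<and> x i \<le> x (Suc i))"
  proof (cases "a = b")
    case True
    then show ?thesis using that[of "\<lambda>_. a" 0] by simp
  next
    case False
    then have ab': "a < b" using ab by simp
    obtain n :: nat where n: "(b - a) / d < real n" using reals_Archimedean2 by blast
    have n0: "n > 0" using n ab' d by (cases n) (auto simp: field_simps)
    define x where "x = (\<lambda>i::nat. a + real i * (b - a) / real n)"
    have step: "x (Suc i) - x i = (b - a) / real n" for i using n0 by (simp add: x_def field_simps)
    have lt: "(b - a) / real n < d" using n n0 d by (simp add: field_simps)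
    have pos: "(b - a) / real n > 0" using ab' n0 by simp
    have all: "\<forall>i<n. x i < x (Suc i) \<and> x (Suc i) - x i < d \<and> x i \<le> x i \<and> x i \<le> x (Suc i)"
    proof (intro allI impI)
      fix i assume "i < n"
      have "x (Suc i) - x i = (b - a) / real n" by (rule step)
      then show "x i < x (Suc i) \<and> x (Suc i) - x i < d \<and> x i \<le> x i \<and> x i \<le> x (Suc i)"
        using pos lt by linarith
    qed
    have x0: "x 0 = a" and xn: "x n = b" using n0 by (auto simp: x_def)
    show ?thesis by (rule that[of x n]) (use all x0 xn in blast)
  qed
  have "\<bar>(\<Sum>i<n. f (x i) * (g (x (Suc i)) - g (x i))) - I\<bar> < e" using D1[of x n x] P d_def by auto
  moreover have "\<bar>(\<Sum>i<n. f (x i) * (g (x (Suc i)) - g (x i))) - J\<bar> < e" using D2[of x n x] P d_def by auto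
  ultimately have "\<bar>I - J\<bar> < 2 * e" by linarith
  then show False unfolding e_def by simp
qed

lemma RS_integral_exp:
  fixes g :: "real \<Rightarrow> real"
  assumes ab: "a \<le> b" and cont: "continuous_on {a..b} g"
  shows "RS_integral (\<lambda>s. exp (c * s)) g a b =
     exp (c*b) * g b - exp (c*a) * g a - integral {a..b} (\<lambda>u. g u * (c * exp (c*u)))"
  unfolding RS_integral_def
proof (rule the_equality)
  show "has_RS_integral (\<lambda>s. exp (c * s)) g a b
     (exp (c*b) * g b - exp (c*a) * g a - integral {a..b} (\<lambda>u. g u * (c * exp (c*u))))"
    by (rule has_RS_exp[OF ab cont])
  fix I assume "has_RS_integral (\<lambda>s. exp (c * s)) g a b I"
  then show "I = exp (c*b) * g b - exp (c*a) * g a - integral {a..b} (\<lambda>u. g u * (c * exp (c*u)))"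
    by (rule RS_unique[OF ab _ has_RS_exp[OF ab cont]])
qed




definition holder_on :: "real set \<Rightarrow> real \<Rightarrow> (real \<Rightarrow> real) \<Rightarrow> bool" where
  "holder_on S \<beta> f \<longleftrightarrow> (\<exists>C\<ge>0. \<forall>s\<in>S. \<forall>t\<in>S. \<bar>f s - f t\<bar> \<le> C * \<bar>s - t\<bar> powr \<beta>)"

lemma holder_onI: "(\<And>s t. s \<in> S \<Longrightarrow> t \<in> S \<Longrightarrow> \<bar>f s - f t\<bar> \<le> C * \<bar>s - t\<bar> powr \<beta>) \<Longrightarrow> 0 \<le> C \<Longrightarrow> holder_on S \<beta> f"
  unfolding holder_on_def by blast

lemma holder_on_subset: "holder_on S \<beta> f \<Longrightarrow> T \<subseteq> S \<Longrightarrow> holder_on T \<beta> f"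
  unfolding holder_on_def by blast

lemma holder_on_cong: "holder_on S \<beta> f \<Longrightarrow> (\<And>t. t \<in> S \<Longrightarrow> g t = f t) \<Longrightarrow> holder_on S \<beta> g"
  unfolding holder_on_def by simp

lemma holder_on_const: "holder_on S \<beta> (\<lambda>_. k)"
  unfolding holder_on_def by (intro exI[of _ 0]) simp

lemma holder_on_add:
  assumes "holder_on S \<beta> f" "holder_on S \<beta> g"
  shows "holder_on S \<beta> (\<lambda>t. f t + g t)"
proof -
  obtain C1 where C1: "C1 \<ge> 0" "\<And>s t. s \<in> S \<Longrightarrow> t \<in> S \<Longrightarrow> \<bar>f s - f t\<bar> \<le> C1 * \<bar>s - t\<bar> powr \<beta>"
    using assms(1) unfolding holder_on_def by blast
  obtain C2 where C2: "C2 \<ge> 0" "\<And>s t. s \<in> S \<Longrightarrow> t \<in> S \<Longrightarrow> \<bar>g s - g t\<bar> \<le> C2 * \<bar>s - t\<bar> powr \<beta>"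
    using assms(2) unfolding holder_on_def by blast
  show ?thesis
  proof (rule holder_onI[where C="C1 + C2"])
    fix s t assume st: "s \<in> S" "t \<in> S"
    have "\<bar>f s + g s - (f t + g t)\<bar> \<le> \<bar>f s - f t\<bar> + \<bar>g s - g t\<bar>" by simp
    also have "\<dots> \<le> C1 * \<bar>s - t\<bar> powr \<beta> + C2 * \<bar>s - t\<bar> powr \<beta>" using C1(2)[OF st] C2(2)[OF st] by simp
    finally show "\<bar>f s + g s - (f t + g t)\<bar> \<le> (C1 + C2) * \<bar>s - t\<bar> powr \<beta>" by (simp add: algebra_simps)
  qed (use C1 C2 in simp)
qed

lemma holder_on_uminus:
  assumes "holder_on S \<beta> f" shows "holder_on S \<beta> (\<lambda>t. - f t)"
  using assms unfolding holder_on_def by (simp add: abs_minus_commute)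

lemma holder_on_diff:
  assumes "holder_on S \<beta> f" "holder_on S \<beta> g"
  shows "holder_on S \<beta> (\<lambda>t. f t - g t)"
  using holder_on_add[OF assms(1) holder_on_uminus[OF assms(2)]] by simp

lemma holder_on_bounded:
  assumes "holder_on {A..B} \<beta> f" "0 \<le> \<beta>"
  shows "\<exists>M\<ge>0. \<forall>t\<in>{A..B}. \<bar>f t\<bar> \<le> M"
proof -
  obtain C where C: "C \<ge> 0" "\<And>s t. s \<in> {A..B} \<Longrightarrow> t \<in> {A..B} \<Longrightarrow> \<bar>f s - f t\<bar> \<le> C * \<bar>s - t\<bar> powr \<beta>"
    using assms(1) unfolding holder_on_def by blast
  show ?thesis
  proof (intro exI[of _ "\<bar>f A\<bar> + C * \<bar>B - A\<bar> powr \<beta>"] conjI ballI)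
    fix t assume t: "t \<in> {A..B}"
    then have A: "A \<in> {A..B}" by auto
    have "\<bar>t - A\<bar> powr \<beta> \<le> \<bar>B - A\<bar> powr \<beta>" using t assms(2) by (intro powr_mono2) auto
    then have "C * \<bar>t - A\<bar> powr \<beta> \<le> C * \<bar>B - A\<bar> powr \<beta>" using C(1) by (rule mult_left_mono)
    moreover have "\<bar>f t - f A\<bar> \<le> C * \<bar>t - A\<bar> powr \<beta>" using C(2)[OF t A] .
    ultimately show "\<bar>f t\<bar> \<le> \<bar>f A\<bar> + C * \<bar>B - A\<bar> powr \<beta>" by linarith
  qed (use C(1) in simp)
qed

lemma holder_on_mult:
  assumes f: "holder_on {A..B} \<beta> f" and g: "holder_on {A..B} \<beta> g" and b: "0 \<le> \<beta>"
  shows "holder_on {A..B} \<beta> (\<lambda>t. f t * g t)"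
proof -
  obtain C1 where C1: "C1 \<ge> 0" "\<And>s t. s \<in> {A..B} \<Longrightarrow> t \<in> {A..B} \<Longrightarrow> \<bar>f s - f t\<bar> \<le> C1 * \<bar>s - t\<bar> powr \<beta>"
    using f unfolding holder_on_def by blast
  obtain C2 where C2: "C2 \<ge> 0" "\<And>s t. s \<in> {A..B} \<Longrightarrow> t \<in> {A..B} \<Longrightarrow> \<bar>g s - g t\<bar> \<le> C2 * \<bar>s - t\<bar> powr \<beta>"
    using g unfolding holder_on_def by blast
  obtain M1 where M1: "M1 \<ge> 0" "\<And>t. t \<in> {A..B} \<Longrightarrow> \<bar>f t\<bar> \<le> M1" using holder_on_bounded[OF f b] by blast
  obtain M2 where M2: "M2 \<ge> 0" "\<And>t. t \<in> {A..B} \<Longrightarrow> \<bar>g t\<bar> \<le> M2" using holder_on_bounded[OF g b] by blast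
  show ?thesis
  proof (rule holder_onI[where C="M1 * C2 + M2 * C1"])
    fix s t assume st: "s \<in> {A..B}" "t \<in> {A..B}"
    let ?p = "\<bar>s - t\<bar> powr \<beta>"
    have "f s * g s - f t * g t = f s * (g s - g t) + g t * (f s - f t)" by (simp add: algebra_simps)
    then have "\<bar>f s * g s - f t * g t\<bar> \<le> \<bar>f s\<bar> * \<bar>g s - g t\<bar> + \<bar>g t\<bar> * \<bar>f s - f t\<bar>"
      by (simp add: abs_mult[symmetric] abs_triangle_ineq)
    also have "\<dots> \<le> M1 * (C2 * ?p) + M2 * (C1 * ?p)"
      by (intro add_mono mult_mono M1 M2 C1 C2 st) (use M1 M2 in auto)
    finally show "\<bar>f s * g s - f t * g t\<bar> \<le> (M1 * C2 + M2 * C1) * ?p" by (simp add: algebra_simps)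
  qed (use M1 M2 C1 C2 in simp)
qed

lemma lipschitz_holder:
  assumes L: "\<And>s t. s \<in> {A..B} \<Longrightarrow> t \<in> {A..B} \<Longrightarrow> \<bar>f s - f t\<bar> \<le> L * \<bar>s - t\<bar>"
    and L0: "0 \<le> L" and b: "0 < \<beta>" "\<beta> \<le> 1"
  shows "holder_on {A..B} \<beta> f"
proof (rule holder_onI[where C="L * \<bar>B - A\<bar> powr (1 - \<beta>)"])
  fix s t assume st: "s \<in> {A..B}" "t \<in> {A..B}"
  have "\<bar>s - t\<bar> = \<bar>s - t\<bar> powr (1 - \<beta>) * \<bar>s - t\<bar> powr \<beta>"
  proof (cases "s = t")
    case False
    then show ?thesis by (simp add: powr_add[symmetric])
  qed simp
  also have "\<dots> \<le> \<bar>B - A\<bar> powr (1 - \<beta>) * \<bar>s - t\<bar> powr \<beta>"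
    using st b by (intro mult_right_mono powr_mono2) auto
  finally have "L * \<bar>s - t\<bar> \<le> L * (\<bar>B - A\<bar> powr (1 - \<beta>) * \<bar>s - t\<bar> powr \<beta>)"
    using L0 by (rule mult_left_mono)
  with L[OF st] show "\<bar>f s - f t\<bar> \<le> L * \<bar>B - A\<bar> powr (1 - \<beta>) * \<bar>s - t\<bar> powr \<beta>"
    by (simp add: mult.assoc)
qed (use L0 in simp)

lemma holder_on_order:
  assumes f: "holder_on {A..B} \<beta> f" and b: "0 \<le> \<beta>'" "\<beta>' \<le> \<beta>"
  shows "holder_on {A..B} \<beta>' f"
proof -
  obtain C where C: "C \<ge> 0" "\<And>s t. s \<in> {A..B} \<Longrightarrow> t \<in> {A..B} \<Longrightarrow> \<bar>f s - f t\<bar> \<le> C * \<bar>s - t\<bar> powr \<beta>"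
    using f unfolding holder_on_def by blast
  show ?thesis
  proof (rule holder_onI[where C="C * \<bar>B - A\<bar> powr (\<beta> - \<beta>')"])
    fix s t assume st: "s \<in> {A..B}" "t \<in> {A..B}"
    have "\<bar>s - t\<bar> powr \<beta> = \<bar>s - t\<bar> powr (\<beta> - \<beta>') * \<bar>s - t\<bar> powr \<beta>'"
    proof (cases "s = t")
      case False
      then show ?thesis by (simp add: powr_add[symmetric])
    qed simp
    also have "\<dots> \<le> \<bar>B - A\<bar> powr (\<beta> - \<beta>') * \<bar>s - t\<bar> powr \<beta>'"
      using st b by (intro mult_right_mono powr_mono2) auto
    finally have "C * \<bar>s - t\<bar> powr \<beta> \<le> C * (\<bar>B - A\<bar> powr (\<beta> - \<beta>') * \<bar>s - t\<bar> powr \<beta>')"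
      using C(1) by (rule mult_left_mono)
    with C(2)[OF st] show "\<bar>f s - f t\<bar> \<le> C * \<bar>B - A\<bar> powr (\<beta> - \<beta>') * \<bar>s - t\<bar> powr \<beta>'"
      by (simp add: mult.assoc)
  qed (use C in simp)
qed

lemma holder_on_compose:
  assumes F: "holder_on {P..Q} \<beta> F" and b: "0 \<le> \<beta>"
    and maps: "\<And>t. t \<in> {A..B} \<Longrightarrow> \<phi> t \<in> {P..Q}"
    and L: "\<And>s t. s \<in> {A..B} \<Longrightarrow> t \<in> {A..B} \<Longrightarrow> \<bar>\<phi> s - \<phi> t\<bar> \<le> L * \<bar>s - t\<bar>" and L0: "0 \<le> L"
  shows "holder_on {A..B} \<beta> (\<lambda>t. F (\<phi> t))"
proof -
  obtain C where C: "C \<ge> 0" "\<And>s t. s \<in> {P..Q} \<Longrightarrow> t \<in> {P..Q} \<Longrightarrow> \<bar>F s - F t\<bar> \<le> C * \<bar>s - t\<bar> powr \<beta>"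
    using F unfolding holder_on_def by blast
  show ?thesis
  proof (rule holder_onI[where C="C * L powr \<beta>"])
    fix s t assume st: "s \<in> {A..B}" "t \<in> {A..B}"
    have "\<bar>\<phi> s - \<phi> t\<bar> powr \<beta> \<le> (L * \<bar>s - t\<bar>) powr \<beta>"
      using L[OF st] b by (intro powr_mono2) auto
    also have "\<dots> = L powr \<beta> * \<bar>s - t\<bar> powr \<beta>" using L0 by (simp add: powr_mult)
    finally have "C * \<bar>\<phi> s - \<phi> t\<bar> powr \<beta> \<le> C * (L powr \<beta> * \<bar>s - t\<bar> powr \<beta>)"
      using C(1) by (rule mult_left_mono)
    with C(2)[OF maps maps, OF st] show "\<bar>F (\<phi> s) - F (\<phi> t)\<bar> \<le> C * L powr \<beta> * \<bar>s - t\<bar> powr \<beta>"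
      by (simp add: mult.assoc)
  qed (use C in simp)
qed

lemma integral_lipschitz:
  fixes h :: "real \<Rightarrow> real"
  assumes cont: "continuous_on {A..B} h" and K: "\<And>u. u \<in> {A..B} \<Longrightarrow> \<bar>h u\<bar> \<le> K"
    and st: "s \<in> {A..B}" "t \<in> {A..B}"
  shows "\<bar>integral {A..s} h - integral {A..t} h\<bar> \<le> K * \<bar>s - t\<bar>"
proof -
  have hi: "h integrable_on {A..B}" by (rule integrable_continuous_interval[OF cont])
  have *: "\<bar>integral {A..y} h - integral {A..x} h\<bar> \<le> K * (y - x)"
    if xy: "x \<in> {A..B}" "y \<in> {A..B}" "x \<le> y" for x y
  proof -
    have c: "integral {A..x} h + integral {x..y} h = integral {A..y} h"
      using Henstock_Kurzweil_Integration.integral_combine[of A x y h]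
        integrable_subinterval_real[OF hi, of A y] xy by auto
    have i: "(h has_integral integral {x..y} h) {x..y}"
      using integrable_subinterval_real[OF hi, of x y] xy by (auto intro: integrable_integral)
    have "norm (integral {x..y} h) \<le> K * Henstock_Kurzweil_Integration.content {x..y}"
    proof (rule has_integral_bound_real[OF _ _ i, where S="{}"])
      have "\<bar>h x\<bar> \<le> K" using K xy by auto
      then show "0 \<le> K" by linarith
    qed (use K xy in auto)
    then show ?thesis using c xy by (simp add: content_real)
  qed
  show ?thesis
  proof (cases "s \<le> t")
    case True then show ?thesis using *[OF st(1) st(2)] by (simp add: abs_minus_commute)
  next
    case False then show ?thesis using *[OF st(2) st(1)] by simp
  qed
qed

lemma exp_lipschitz:
  fixes c A B :: real
  shows "\<exists>L\<ge>0. \<forall>s\<in>{A..B}. \<forall>t\<in>{A..B}. \<bar>exp (c * s) - exp (c*t)\<bar> \<le> L * \<bar>s - t\<bar>"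
proof (intro exI[of _ "\<bar>c\<bar> * (exp (c*A) + exp (c*B))"] conjI ballI)
  fix s t assume st: "s \<in> {A..B}" "t \<in> {A..B}"
  have e: "exp (c*x) = exp (c*A) + integral {A..x} (\<lambda>u. c * exp (c*u))" if "x \<in> {A..B}" for x
    using integral_unique[OF ftc_exp[of A x c]] that by simp
  have "\<bar>integral {A..s} (\<lambda>u. c * exp (c*u)) - integral {A..t} (\<lambda>u. c * exp (c*u))\<bar>
      \<le> \<bar>c\<bar> * (exp (c*A) + exp (c*B)) * \<bar>s - t\<bar>"
    by (rule integral_lipschitz[OF _ _ st]) (auto intro!: continuous_intros exp_bound_Icc)
  then show "\<bar>exp (c * s) - exp (c*t)\<bar> \<le> \<bar>c\<bar> * (exp (c*A) + exp (c*B)) * \<bar>s - t\<bar>"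
    using e[OF st(1)] e[OF st(2)] by simp
qed simp

lemma exp_holder:
  assumes "0 < \<beta>" "\<beta> \<le> 1"
  shows "holder_on {A..B} \<beta> (\<lambda>t. exp (c*t))"
proof -
  obtain L where "L \<ge> 0" "\<forall>s\<in>{A..B}. \<forall>t\<in>{A..B}. \<bar>exp (c * s) - exp (c*t)\<bar> \<le> L * \<bar>s - t\<bar>"
    using exp_lipschitz[where c=c and A=A and B=B] by blast
  then show ?thesis by (intro lipschitz_holder[OF _ _ assms, where L=L]) auto
qed

lemma RS_holder:
  fixes g :: "real \<Rightarrow> real"
  assumes AB: "A \<le> B" and cont: "continuous_on {A..B} g" and g: "holder_on {A..B} \<beta> g"
    and b: "0 < \<beta>" "\<beta> \<le> 1"
  shows "holder_on {A..B} \<beta> (\<lambda>t. RS_integral (\<lambda>s. exp (c * s)) g A t)"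
proof (rule holder_on_cong)
  define h where "h = (\<lambda>u. g u * (c * exp (c*u)))"
  have hc: "continuous_on {A..B} h" unfolding h_def by (intro continuous_intros cont)
  obtain K where K: "\<And>u. u \<in> {A..B} \<Longrightarrow> \<bar>h u\<bar> \<le> K" "K \<ge> 0"
  proof -
    have "compact (h ` {A..B})" by (intro compact_continuous_image hc compact_Icc)
    then obtain K where "\<forall>x\<in>h ` {A..B}. norm x \<le> K" using compact_imp_bounded bounded_iff by metis
    then show ?thesis using that[of "max K 0"] by force
  qed
  have hi: "holder_on {A..B} \<beta> (\<lambda>t. integral {A..t} h)"
    by (rule lipschitz_holder[OF _ K(2) b]) (rule integral_lipschitz[OF hc K(1)])
  show "holder_on {A..B} \<beta> (\<lambda>t. exp (c*t) * g t - exp (c*A) * g A - integral {A..t} h)"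
    by (intro holder_on_diff holder_on_const hi holder_on_mult exp_holder g b) (use b in simp)
  fix t assume t: "t \<in> {A..B}"
  show "RS_integral (\<lambda>s. exp (c * s)) g A t = exp (c*t) * g t - exp (c*A) * g A - integral {A..t} h"
    unfolding h_def using t by (intro RS_integral_exp continuous_on_subset[OF cont]) auto
qed




lemma half_pow_powr: "((1/2::real)^n) powr \<beta> = ((1/2) powr \<beta>)^n"
proof -
  have "((1/2::real)^n) powr \<beta> = ((1/2) powr real n) powr \<beta>" by (simp add: powr_realpow)
  also have "\<dots> = (1/2) powr (real n * \<beta>)" by (simp add: powr_powr)
  also have "\<dots> = ((1/2) powr \<beta>)^n" by (simp add: powr_power)
  finally show ?thesis .
qed

lemma nat_floor_bounds:
  fixes y :: real assumes "0 \<le> y"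
  shows "real (nat \<lfloor>y\<rfloor>) \<le> y" "y < real (nat \<lfloor>y\<rfloor>) + 1"
  using assms by linarith+

lemma nat_unique_floor:
  fixes k k' :: nat and y :: real
  assumes "real k \<le> y" "y < real k + 1" "real k' \<le> y" "y < real k' + 1"
  shows "k = k'"
  using assms by linarith

definition dy :: "nat \<Rightarrow> real \<Rightarrow> real" where
  "dy m x = real (nat \<lfloor>x * 2^m\<rfloor>) / 2^m"

lemma dy_bounds:
  fixes x :: real
  assumes "0 \<le> x"
  shows "0 \<le> dy m x" "dy m x \<le> x" "x - dy m x < (1/2)^m"
proof -
  let ?k = "nat \<lfloor>x * 2^m\<rfloor>"
  have k: "real ?k \<le> x * 2^m" "x * 2^m < real ?k + 1" using nat_floor_bounds[of "x * 2^m"] assms by auto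
  show "0 \<le> dy m x" unfolding dy_def by simp
  show "dy m x \<le> x" unfolding dy_def using k by (simp add: divide_le_eq)
  have "x - dy m x = (x * 2^m - real ?k) / 2^m" unfolding dy_def by (simp add: field_simps)
  also have "\<dots> < 1 / 2^m"
  proof -
    have "x * 2^m - real ?k < 1" using k by linarith
    then show ?thesis by (intro divide_strict_right_mono) auto
  qed
  finally show "x - dy m x < (1/2)^m" by (simp add: power_one_over)
qed

lemma dy_step:
  fixes x :: real
  assumes "0 \<le> x"
  shows "nat \<lfloor>x * 2^(Suc m)\<rfloor> = 2 * nat \<lfloor>x * 2^m\<rfloor> \<or> nat \<lfloor>x * 2^(Suc m)\<rfloor> = 2 * nat \<lfloor>x * 2^m\<rfloor> + 1"
proof -
  let ?k = "nat \<lfloor>x * 2^m\<rfloor>" and ?k' = "nat \<lfloor>x * 2^(Suc m)\<rfloor>"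
  have k: "real ?k \<le> x * 2^m" "x * 2^m < real ?k + 1" using nat_floor_bounds[of "x * 2^m"] assms by auto
  have k': "real ?k' \<le> x * 2^(Suc m)" "x * 2^(Suc m) < real ?k' + 1" using nat_floor_bounds[of "x * 2^Suc m"] assms by auto
  have e: "x * 2^(Suc m) = 2 * (x * 2^m)" by simp
  have "2 * ?k \<le> ?k'" using k k' e by linarith
  moreover have "?k' \<le> 2 * ?k + 1" using k k' e by linarith
  ultimately show ?thesis by linarith
qed

locale dyadic_ctx =
  fixes f :: "real \<Rightarrow> real" and N :: nat and \<beta> :: real and n0 :: nat
  assumes cont: "continuous_on {0..real N} f" and b: "0 < \<beta>"
    and inc: "\<And>n k. n \<ge> n0 \<Longrightarrow> k < N * 2^n \<Longrightarrow> \<bar>f ((real k + 1) / 2^n) - f (real k / 2^n)\<bar> \<le> ((1/2)^n) powr \<beta>"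
begin

definition r :: real where "r = (1/2) powr \<beta>"

lemma r: "0 < r" "r < 1"
  unfolding r_def using b by (auto simp: powr01_less_one)

lemma inc': "n \<ge> n0 \<Longrightarrow> k < N * 2^n \<Longrightarrow> \<bar>f ((real k + 1) / 2^n) - f (real k / 2^n)\<bar> \<le> r^n"
  using inc by (simp add: r_def half_pow_powr)

lemma stepA:
  assumes x: "x \<in> {0..real N}" and m: "m \<ge> n0"
  shows "\<bar>f (dy (Suc m) x) - f (dy m x)\<bar> \<le> r^(Suc m)"
proof -
  let ?k = "nat \<lfloor>x * 2^m\<rfloor>" and ?k' = "nat \<lfloor>x * 2^(Suc m)\<rfloor>"
  have x0: "0 \<le> x" using x by simp
  have k': "real ?k' \<le> x * 2^(Suc m)" using nat_floor_bounds[of "x * 2^Suc m"] x0 by auto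
  from dy_step[OF x0, of m] show ?thesis
  proof
    assume "?k' = 2 * ?k"
    then have "dy (Suc m) x = dy m x" unfolding dy_def by simp
    then show ?thesis using r by simp
  next
    assume h: "?k' = 2 * ?k + 1"
    have "real ?k' \<le> real N * 2^(Suc m)"
      using k' x by (meson atLeastAtMost_iff mult_right_mono order.trans zero_le_numeral zero_le_power)
    then have "?k' \<le> N * 2^(Suc m)" by (metis of_nat_le_iff of_nat_mult of_nat_numeral of_nat_power)
    then have lt: "2 * ?k < N * 2^(Suc m)" using h by simp
    have "\<bar>f ((real (2 * ?k) + 1) / 2^(Suc m)) - f (real (2 * ?k) / 2^(Suc m))\<bar> \<le> r^(Suc m)"
      using inc'[OF _ lt] m by simp
    moreover have "dy (Suc m) x = (real (2 * ?k) + 1) / 2^(Suc m)" unfolding dy_def h by simp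
    moreover have "dy m x = real (2 * ?k) / 2^(Suc m)" unfolding dy_def by simp
    ultimately show ?thesis by simp
  qed
qed

lemma stepB:
  assumes x: "x \<in> {0..real N}" and n: "n \<ge> n0"
  shows "\<bar>f (dy (n + j) x) - f (dy n x)\<bar> \<le> r^(Suc n) / (1 - r) - r^(Suc (n + j)) / (1 - r)"
proof (induction j)
  case 0 then show ?case by simp
next
  case (Suc j)
  have "\<bar>f (dy (n + Suc j) x) - f (dy n x)\<bar> \<le> \<bar>f (dy (Suc (n + j)) x) - f (dy (n + j) x)\<bar> + \<bar>f (dy (n + j) x) - f (dy n x)\<bar>"
    by simp
  also have "\<dots> \<le> r^(Suc (n + j)) + (r^(Suc n) / (1 - r) - r^(Suc (n + j)) / (1 - r))"
    using stepA[OF x, of "n + j"] n Suc by simp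
  also have "\<dots> = r^(Suc n) / (1 - r) - r^(Suc (n + Suc j)) / (1 - r)"
  proof -
    have q: "1 - r \<noteq> 0" using r by simp
    have **: "\<And>a b q. q \<noteq> 0 \<Longrightarrow> b + (a / q - b / q) = a / q - (1 - q) * b / (q::real)"
      by (simp add: field_simps)
    have *: "\<And>a b. b + (a / (1 - r) - b / (1 - r)) = a / (1 - r) - r * b / (1 - r)"
      using **[OF q] by simp
    show ?thesis using *[of "r^(Suc (n + j))" "r^(Suc n)"] by simp
  qed
  finally show ?case .
qed

lemma stepC:
  assumes x: "x \<in> {0..real N}" and n: "n \<ge> n0"
  shows "\<bar>f x - f (dy n x)\<bar> \<le> r^(Suc n) / (1 - r)"
proof -
  have x0: "0 \<le> x" using x by simp
  have lim: "(\<lambda>m. dy m x) \<longlonglongrightarrow> x"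
  proof (rule tendsto_sandwich[where f="\<lambda>m. x - (1/2)^m" and h="\<lambda>m. x"])
    show "\<forall>\<^sub>F m in sequentially. x - (1/2)^m \<le> dy m x"
    proof (intro always_eventually allI)
      fix m show "x - (1/2)^m \<le> dy m x" using dy_bounds(3)[OF x0, of m] by linarith
    qed
    show "\<forall>\<^sub>F m in sequentially. dy m x \<le> x" using dy_bounds(2)[OF x0] by (intro always_eventually allI) auto
    show "(\<lambda>m. x - (1/2::real)^m) \<longlonglongrightarrow> x"
      using tendsto_diff[OF tendsto_const[of x] LIMSEQ_power_zero[of "1/2::real"]] by simp
  qed simp
  have ev: "\<forall>\<^sub>F m in sequentially. dy m x \<in> {0..real N}"
    by (intro always_eventually allI) (metis atLeastAtMost_iff dy_bounds(1,2) x0 x order_trans)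
  have "(\<lambda>m. f (dy m x)) \<longlonglongrightarrow> f x"
    by (rule continuous_on_tendsto_compose[OF cont lim x ev])
  then have L: "(\<lambda>m. \<bar>f (dy m x) - f (dy n x)\<bar>) \<longlonglongrightarrow> \<bar>f x - f (dy n x)\<bar>"
    by (intro tendsto_intros)
  show ?thesis
  proof (rule LIMSEQ_le_const2[OF L], intro exI[of _ n] allI impI)
    fix m assume "m \<ge> n"
    then obtain j where "m = n + j" using le_Suc_ex by blast
    then have "\<bar>f (dy m x) - f (dy n x)\<bar> \<le> r^(Suc n) / (1 - r) - r^(Suc (n + j)) / (1 - r)"
      using stepB[OF x n] by simp
    also have "\<dots> \<le> r^(Suc n) / (1 - r)" using r by simp
    finally show "\<bar>f (dy m x) - f (dy n x)\<bar> \<le> r^(Suc n) / (1 - r)" .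
  qed
qed

lemma stepD:
  assumes s: "s \<in> {0..real N}" and t: "t \<in> {0..real N}" and st: "s < t" and n: "n \<ge> n0"
    and lo: "(1/2)^(Suc n) < t - s" and hi: "t - s \<le> (1/2)^n"
  shows "\<bar>f t - f s\<bar> \<le> (2 / (1 - r) + 1) * 2 powr \<beta> * (t - s) powr \<beta>"
proof -
  let ?ks = "nat \<lfloor>s * 2^n\<rfloor>" and ?kt = "nat \<lfloor>t * 2^n\<rfloor>"
  have ks: "real ?ks \<le> s * 2^n" "s * 2^n < real ?ks + 1" using nat_floor_bounds[of "s * 2^n"] s by auto
  have kt: "real ?kt \<le> t * 2^n" "t * 2^n < real ?kt + 1" using nat_floor_bounds[of "t * 2^n"] t by auto
  have "(t - s) * 2^n \<le> 1" using hi by (simp add: power_one_over field_simps)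
  then have ts: "t * 2^n \<le> s * 2^n + 1" by (simp add: algebra_simps)
  have "s * 2^n \<le> t * 2^n" using st by simp
  then have o1: "?ks \<le> ?kt" using ks kt by linarith
  have o2: "?kt \<le> ?ks + 1" using ks kt ts by linarith
  have mid: "\<bar>f (dy n t) - f (dy n s)\<bar> \<le> r^n"
  proof (cases "?kt = ?ks")
    case True then show ?thesis unfolding dy_def using r by simp
  next
    case False
    then have e: "?kt = ?ks + 1" using o1 o2 by linarith
    have "real ?kt \<le> real N * 2^n" using kt t by (meson atLeastAtMost_iff mult_right_mono order.trans zero_le_numeral zero_le_power)
    then have "?kt \<le> N * 2^n" by (metis of_nat_le_iff of_nat_mult of_nat_numeral of_nat_power)
    then have lt: "?ks < N * 2^n" using e by simp
    have "dy n t = (real ?ks + 1) / 2^n" unfolding dy_def e by simp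
    moreover have "dy n s = real ?ks / 2^n" unfolding dy_def by simp
    ultimately show ?thesis using inc'[OF n lt] by simp
  qed
  have "\<bar>f t - f s\<bar> \<le> \<bar>f t - f (dy n t)\<bar> + \<bar>f (dy n t) - f (dy n s)\<bar> + \<bar>f s - f (dy n s)\<bar>" by simp
  also have "\<dots> \<le> r^(Suc n) / (1 - r) + r^n + r^(Suc n) / (1 - r)"
    using stepC[OF t n] stepC[OF s n] mid by simp
  also have "\<dots> \<le> r^n / (1 - r) + r^n + r^n / (1 - r)"
  proof -
    have "r^(Suc n) \<le> r^n" using r by (simp add: power_Suc mult_left_le_one_le less_imp_le)
    then have "r^(Suc n) / (1 - r) \<le> r^n / (1 - r)" using r by (intro divide_right_mono) auto
    then show ?thesis by simp
  qed
  also have "\<dots> = (2 / (1 - r) + 1) * r^n" by (simp add: field_simps)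
  also have "r^n = 2 powr \<beta> * ((1/2)^(Suc n)) powr \<beta>"
  proof -
    have "((1/2::real)^(Suc n)) powr \<beta> = r^(Suc n)" unfolding r_def by (rule half_pow_powr)
    moreover have "2 powr \<beta> * r = 1" unfolding r_def by (simp add: powr_divide)
    ultimately show ?thesis by (simp add: mult.assoc[symmetric])
  qed
  also have "(2 / (1 - r) + 1) * (2 powr \<beta> * ((1/2)^(Suc n)) powr \<beta>) \<le> (2 / (1 - r) + 1) * (2 powr \<beta> * (t - s) powr \<beta>)"
    using r lo b by (intro mult_left_mono powr_mono2) auto
  finally show ?thesis by (simp add: mult.assoc)
qed

lemma holder: "holder_on {0..real N} \<beta> f"
proof -
  define C1 where "C1 = (2 / (1 - r) + 1) * 2 powr \<beta>"
  have C1: "C1 \<ge> 0" unfolding C1_def using r by simp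
  obtain M where M: "\<And>x. x \<in> {0..real N} \<Longrightarrow> \<bar>f x\<bar> \<le> M"
  proof -
    have "compact (f ` {0..real N})" by (intro compact_continuous_image cont compact_Icc)
    then obtain M where "\<forall>y\<in>f ` {0..real N}. norm y \<le> M" using compact_imp_bounded bounded_iff by metis
    then show ?thesis using that[of M] by force
  qed
  have M0: "M \<ge> 0" using M[of 0] by auto
  define \<delta> where "\<delta> = (1/2::real)^n0"
  have \<delta>: "\<delta> > 0" unfolding \<delta>_def by simp
  define C where "C = C1 + 2 * M / \<delta> powr \<beta>"
  have C0: "C \<ge> 0" unfolding C_def using C1 M0 \<delta> by simp
  have main: "\<bar>f t - f s\<bar> \<le> C * (t - s) powr \<beta>" if s: "s \<in> {0..real N}" and t: "t \<in> {0..real N}" and st: "s < t" for s t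
  proof (cases "t - s \<le> \<delta>")
    case True
    obtain m where m: "(1/2::real)^m < t - s" using real_arch_pow_inv[of "t - s" "1/2"] st by auto
    define n' where "n' = (LEAST m. (1/2::real)^m < t - s)"
    have n'1: "(1/2::real)^n' < t - s" unfolding n'_def by (rule LeastI[of _ m]) (rule m)
    have n'pos: "n' > n0"
    proof (rule ccontr)
      assume a: "\<not> n' > n0"
      have "(1/2::real)^n0 \<le> (1/2)^n'" by (rule power_decreasing) (use a in auto)
      then show False using True n'1 unfolding \<delta>_def by linarith
    qed
    define n where "n = n' - 1"
    have nn: "n' = Suc n" unfolding n_def using n'pos by simp
    have hi: "t - s \<le> (1/2)^n"
    proof (rule ccontr)
      assume "\<not> t - s \<le> (1/2)^n"
      then have "(1/2::real)^n < t - s" by simp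
      then have "n' \<le> n" unfolding n'_def by (rule Least_le)
      then show False using nn by simp
    qed
    have "\<bar>f t - f s\<bar> \<le> C1 * (t - s) powr \<beta>"
      unfolding C1_def by (rule stepD[OF s t st _ _ hi]) (use n'pos nn n'1 in auto)
    also have "\<dots> \<le> C * (t - s) powr \<beta>" unfolding C_def using M0 \<delta> by (intro mult_right_mono) auto
    finally show ?thesis .
  next
    case False
    have "\<bar>f t - f s\<bar> \<le> 2 * M" using M[OF s] M[OF t] by simp
    also have "\<dots> = 2 * M / \<delta> powr \<beta> * \<delta> powr \<beta>" using \<delta> by simp
    also have "\<dots> \<le> 2 * M / \<delta> powr \<beta> * (t - s) powr \<beta>"
      using False \<delta> b M0 by (intro mult_left_mono powr_mono2) auto
    also have "\<dots> \<le> C * (t - s) powr \<beta>" unfolding C_def using C1 by (intro mult_right_mono) auto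
    finally show ?thesis .
  qed
  show ?thesis
  proof (rule holder_onI[OF _ C0])
    fix s t assume s: "s \<in> {0..real N}" and t: "t \<in> {0..real N}"
    consider "s < t" | "s = t" | "t < s" by linarith
    then show "\<bar>f s - f t\<bar> \<le> C * \<bar>s - t\<bar> powr \<beta>"
    proof cases
      case 1 then show ?thesis using main[OF s t] by (simp add: abs_minus_commute)
    next
      case 3 then show ?thesis using main[OF t s] by simp
    qed simp
  qed
qed

end




lemma normal_tail:
  fixes X :: "'a \<Rightarrow> real"
  assumes P: "prob_space M" and D: "distributed M lborel X (normal_density 0 \<sigma>)"
    and \<sigma>: "0 < \<sigma>" and e: "0 < \<epsilon>" and p: "1 \<le> p"
  shows "measure M {\<omega>\<in>space M. \<epsilon> \<le> \<bar>X \<omega>\<bar>} \<le> fact (2*p) / ((2 / \<sigma>\<^sup>2)^p * fact p) / \<epsilon>^(2*p)"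
proof -
  interpret prob_space M by (rule P)
  have Xm[measurable]: "X \<in> borel_measurable M"
    using distributed_measurable[OF D] by simp
  have mom: "has_bochner_integral lborel (\<lambda>x. normal_density 0 \<sigma> x * x ^ (2 * p)) (fact (2 * p) / ((2 / \<sigma>\<^sup>2)^p * fact p))"
    using normal_moment_even[OF \<sigma>, of 0 p] by simp
  have nn: "\<And>x. 0 \<le> normal_density 0 \<sigma> x" by (simp add: normal_density_nonneg)
  have "integrable lborel (\<lambda>x. normal_density 0 \<sigma> x * x ^ (2 * p))"
    using mom by (simp add: has_bochner_integral_iff)
  then have int: "integrable M (\<lambda>\<omega>. X \<omega> ^ (2*p))"
    using distributed_integrable[OF D, of "\<lambda>x. x ^ (2*p)"] nn by simp
  have ieq: "(\<integral>\<omega>. X \<omega> ^ (2*p) \<partial>M) = fact (2 * p) / ((2 / \<sigma>\<^sup>2)^p * fact p)"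
    using distributed_integral[OF D, of "\<lambda>x. x ^ (2*p)"] mom nn
    by (auto dest: has_bochner_integral_integral_eq)
  have sub: "{\<omega>\<in>space M. \<epsilon> \<le> \<bar>X \<omega>\<bar>} \<subseteq> {\<omega>\<in>space M. \<epsilon>^(2*p) \<le> X \<omega> ^ (2*p)}"
  proof safe
    fix \<omega> assume "\<epsilon> \<le> \<bar>X \<omega>\<bar>"
    then have "\<epsilon>^(2*p) \<le> \<bar>X \<omega>\<bar>^(2*p)" using e by (intro power_mono) auto
    then show "\<epsilon>^(2*p) \<le> X \<omega> ^ (2*p)" by (simp add: power_even_abs)
  qed
  have "measure M {\<omega>\<in>space M. \<epsilon> \<le> \<bar>X \<omega>\<bar>} \<le> measure M {\<omega>\<in>space M. \<epsilon>^(2*p) \<le> X \<omega> ^ (2*p)}"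
    by (rule finite_measure_mono[OF sub]) measurable
  also have "\<dots> \<le> (\<integral>\<omega>. X \<omega> ^ (2*p) \<partial>M) / \<epsilon>^(2*p)"
    by (rule integral_Markov_inequality_measure[OF int, of "space M"]) (use e in \<open>auto simp: zero_le_even_power\<close>)
  finally show ?thesis unfolding ieq .
qed

definition Cp :: "nat \<Rightarrow> real" where "Cp p = fact (2*p) / (2^p * fact p)"

lemma Cp_nonneg: "0 \<le> Cp p" unfolding Cp_def by simp

lemma fbm_tail:
  assumes Z: "continuous_fbm M H Z" and H: "0 < H"
    and st: "0 \<le> s" "0 \<le> t" and e: "0 < \<epsilon>" and p: "1 \<le> p"
  shows "measure M {\<omega>\<in>space M. \<epsilon> \<le> \<bar>Z t \<omega> - Z s \<omega>\<bar>} \<le> Cp p * \<bar>t - s\<bar> powr (2*H*p) / \<epsilon>^(2*p)"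
proof (cases "s = t")
  case True
  then have E: "{\<omega>\<in>space M. \<epsilon> \<le> \<bar>Z t \<omega> - Z s \<omega>\<bar>} = {}" using e by auto
  show ?thesis unfolding E using Cp_nonneg[of p] e by simp
next
  case False
  have P: "prob_space M" using Z unfolding continuous_fbm_def centered_gaussian_process_def by blast
  define \<sigma> where "\<sigma> = \<bar>t - s\<bar> powr H"
  have \<sigma>: "0 < \<sigma>" unfolding \<sigma>_def using False by simp
  have "measure M {\<omega>\<in>space M. \<epsilon> \<le> \<bar>Z t \<omega> - Z s \<omega>\<bar>} \<le> fact (2*p) / ((2 / \<sigma>\<^sup>2)^p * fact p) / \<epsilon>^(2*p)"
    using normal_tail[OF P incr_dist[OF Z st(1) st(2) False] _ e p] \<sigma> unfolding \<sigma>_def by simp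
  also have "fact (2*p) / ((2 / \<sigma>\<^sup>2)^p * fact p) = Cp p * \<bar>t - s\<bar> powr (2*H*p)"
  proof -
    have "(\<sigma>\<^sup>2)^p = \<bar>t - s\<bar> powr (2*H*p)"
      unfolding \<sigma>_def using False
      by (simp add: power_mult[symmetric] powr_power mult_ac)
    then show ?thesis unfolding Cp_def using \<sigma> by (simp add: power_divide field_simps)
  qed
  finally show ?thesis .
qed




lemma fbm_meas:
  assumes Z: "continuous_fbm M H Z" and t: "0 \<le> t"
  shows "Z t \<in> borel_measurable M"
proof -
  have "(\<forall>t\<in>{0..}. Z t \<in> borel_measurable M)"
    using Z unfolding continuous_fbm_def centered_gaussian_process_def by (elim conjE) assumption
  then show ?thesis using t by simp
qed

lemma fbm_prob: "continuous_fbm M H Z \<Longrightarrow> prob_space M"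
  unfolding continuous_fbm_def centered_gaussian_process_def by (elim conjE)

lemma fbm_zero:
  assumes Z: "continuous_fbm M H Z" and H: "0 < H"
  shows "AE \<omega> in M. Z 0 \<omega> = 0"
proof -
  have G: "centered_gaussian_process M {0..} (fbm_cov H) Z" using Z by (simp add: continuous_fbm_def)
  define ts where "ts = (\<lambda>i::nat. 0::real)"
  define c where "c = (\<lambda>i::nat. 1::real)"
  have "\<forall>i<1. ts i \<in> {0..}" by (simp add: ts_def)
  with G have *: "let v = (\<Sum>i<1. \<Sum>j<1. c i * c j * fbm_cov H (ts i) (ts j)) in
          (if v > 0
           then distributed M lborel (\<lambda>\<omega>. \<Sum>i<1. c i * Z (ts i) \<omega>) (normal_density 0 (sqrt v))
           else (AE \<omega> in M. (\<Sum>i<1. c i * Z (ts i) \<omega>) = 0))"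
    unfolding centered_gaussian_process_def by blast
  have v: "(\<Sum>i<1. \<Sum>j<1. c i * c j * fbm_cov H (ts i) (ts j)) = 0"
    using H by (simp add: fbm_cov_def ts_def c_def)
  have f: "(\<lambda>\<omega>. \<Sum>i<1. c i * Z (ts i) \<omega>) = (\<lambda>\<omega>. Z 0 \<omega>)"
    by (simp add: ts_def c_def)
  have "AE \<omega> in M. (\<Sum>i<1. c i * Z (ts i) \<omega>) = 0" using * unfolding v Let_def by simp
  then show ?thesis by (simp add: ts_def c_def)
qed

lemma fbm_holder_N:
  assumes Z: "continuous_fbm M H Z" and H: "0 < H" and b: "0 < \<beta>" "\<beta> < H"
  shows "AE \<omega> in M. holder_on {0..real N} \<beta> (\<lambda>t. Z t \<omega>)"
proof -
  interpret prob_space M by (rule fbm_prob[OF Z])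
  define p where "p = nat \<lceil>1 / (H - \<beta>)\<rceil> + 1"
  have p1: "1 \<le> p" unfolding p_def by simp
  have "1 / (H - \<beta>) \<le> real p" unfolding p_def by linarith
  then have "1 \<le> real p * (H - \<beta>)" using b by (simp add: field_simps)
  then have p2: "2 \<le> 2 * H * real p - 2 * real p * \<beta>" by (simp add: algebra_simps)
  define \<delta> where "\<delta> = (\<lambda>n::nat. (1/2::real)^n)"
  define B where "B = (\<lambda>n (k::nat). {\<omega>\<in>space M. \<delta> n powr \<beta> \<le> \<bar>Z ((real k + 1) / 2^n) \<omega> - Z (real k / 2^n) \<omega>\<bar>})"
  define A where "A = (\<lambda>n. \<Union>k\<in>{..<N * 2^n}. B n k)"
  have Bs: "B n k \<in> sets M" for n k
  proof -
    have [measurable]: "Z ((real k + 1) / 2^n) \<in> borel_measurable M" "Z (real k / 2^n) \<in> borel_measurable M"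
      by (intro fbm_meas[OF Z]; simp)+
    show ?thesis unfolding B_def by measurable
  qed
  have As: "A n \<in> sets M" for n unfolding A_def using Bs by auto
  have Bm: "measure M (B n k) \<le> Cp p * \<delta> n ^ 2" for n k
  proof -
    have d0: "0 < \<delta> n" "\<delta> n \<le> 1" unfolding \<delta>_def by (auto simp: power_le_one)
    have dist: "\<bar>(real k + 1) / 2^n - real k / 2^n\<bar> = \<delta> n"
      unfolding \<delta>_def by (simp add: diff_divide_distrib[symmetric] power_one_over)
    have T: "measure M {\<omega>\<in>space M. \<delta> n powr \<beta> \<le> \<bar>Z ((real k + 1) / 2^n) \<omega> - Z (real k / 2^n) \<omega>\<bar>}
        \<le> Cp p * \<bar>(real k + 1) / 2^n - real k / 2^n\<bar> powr (2*H*p) / (\<delta> n powr \<beta>)^(2*p)"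
      by (rule fbm_tail[OF Z H _ _ _ p1]) (use d0 in auto)
    have "measure M (B n k) \<le> Cp p * \<delta> n powr (2*H*p) / (\<delta> n powr \<beta>)^(2*p)"
      using T unfolding B_def dist .
    also have "(\<delta> n powr \<beta>)^(2*p) = \<delta> n powr (2 * real p * \<beta>)"
    proof -
      have "(\<delta> n powr \<beta>)^(2*p) = \<delta> n powr (real (2*p) * \<beta>)" by (rule powr_power) (use d0 in auto)
      then show ?thesis by simp
    qed
    also have "Cp p * \<delta> n powr (2*H*p) / \<delta> n powr (2 * real p * \<beta>) = Cp p * \<delta> n powr (2*H*p - 2 * real p * \<beta>)"
      unfolding powr_diff by simp
    also have "\<dots> \<le> Cp p * \<delta> n powr 2"
      using d0 p2 by (intro mult_left_mono powr_mono' Cp_nonneg) auto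
    also have "\<delta> n powr 2 = \<delta> n ^ 2" using d0 by simp
    finally show ?thesis .
  qed
  have Am: "measure M (A n) \<le> real N * Cp p * (1/2)^n" for n
  proof -
    have "measure M (A n) \<le> (\<Sum>k\<in>{..<N * 2^n}. measure M (B n k))"
      unfolding A_def by (rule measure_UNION_le) (auto intro: Bs)
    also have "\<dots> \<le> (\<Sum>k\<in>{..<N * 2^n}. Cp p * \<delta> n ^ 2)" by (intro sum_mono Bm)
    also have "\<dots> = real N * 2^n * Cp p * ((1/2)^n)^2" unfolding \<delta>_def by simp
    also have "\<dots> = real N * Cp p * (1/2)^n"
      by (simp add: power_mult_distrib[symmetric] power2_eq_square power_one_over field_simps)
    finally show ?thesis .
  qed
  have sum: "summable (\<lambda>n. measure M (A n))"
  proof (rule summable_comparison_test[where g="\<lambda>n. real N * Cp p * (1/2)^n"])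
    show "\<exists>N'. \<forall>n\<ge>N'. norm (measure M (A n)) \<le> real N * Cp p * (1/2)^n" using Am by auto
    show "summable (\<lambda>n. real N * Cp p * (1/2::real)^n)"
      by (intro summable_mult summable_geometric) simp
  qed
  have BC: "AE \<omega> in M. eventually (\<lambda>n. \<omega> \<in> space M - A n) sequentially"
    by (rule borel_cantelli_AE1[OF As _ sum]) (simp add: less_top[symmetric])
  show ?thesis
  proof (rule eventually_mono[OF BC])
    fix \<omega> assume "eventually (\<lambda>n. \<omega> \<in> space M - A n) sequentially"
    then obtain n0 where n0: "\<And>n. n \<ge> n0 \<Longrightarrow> \<omega> \<in> space M - A n" unfolding eventually_sequentially by blast
    have sp: "\<omega> \<in> space M" using n0[of n0] by simp
    have cont: "continuous_on {0..real N} (\<lambda>t. Z t \<omega>)"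
      using Z sp unfolding continuous_fbm_def by (auto intro: continuous_on_subset)
    interpret dyadic_ctx "\<lambda>t. Z t \<omega>" N \<beta> n0
    proof
      show "continuous_on {0..real N} (\<lambda>t. Z t \<omega>)" by (rule cont)
      show "0 < \<beta>" by (rule b)
      fix n k assume n: "n0 \<le> n" and k: "k < N * 2^n"
      have "\<omega> \<notin> B n k" using n0[OF n] k unfolding A_def by auto
      then show "\<bar>Z ((real k + 1) / 2^n) \<omega> - Z (real k / 2^n) \<omega>\<bar> \<le> ((1/2)^n) powr \<beta>"
        using sp unfolding B_def \<delta>_def by auto
    qed
    show "holder_on {0..real N} \<beta> (\<lambda>t. Z t \<omega>)" by (rule holder)
  qed
qed

lemma fbm_holder_all:
  assumes Z: "continuous_fbm M H Z" and H: "0 < H"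
  shows "AE \<omega> in M. Z 0 \<omega> = 0 \<and> (\<forall>\<beta>. 0 < \<beta> \<and> \<beta> < H \<longrightarrow> (\<forall>N::nat. holder_on {0..real N} \<beta> (\<lambda>t. Z t \<omega>)))"
proof -
  define bj where "bj = (\<lambda>j::nat. H * (1 - 1 / (real j + 2)))"
  have bj: "0 < bj j" "bj j < H" for j
  proof -
    have a: "0 < 1 / (real j + 2)" "1 / (real j + 2) < 1" by (auto simp: field_simps)
    show "0 < bj j" unfolding bj_def using H a by (intro mult_pos_pos) auto
    show "bj j < H" unfolding bj_def using H a by simp
  qed
  have "AE \<omega> in M. \<forall>j. \<forall>N::nat. holder_on {0..real N} (bj j) (\<lambda>t. Z t \<omega>)"
    unfolding AE_all_countable using fbm_holder_N[OF Z H bj] by blast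
  moreover have "AE \<omega> in M. Z 0 \<omega> = 0" by (rule fbm_zero[OF Z H])
  ultimately show ?thesis
  proof (eventually_elim)
    case (elim \<omega>)
    show ?case
    proof (intro conjI allI impI)
      show "Z 0 \<omega> = 0" using elim by simp
      fix \<beta> :: real and N :: nat assume b: "0 < \<beta> \<and> \<beta> < H"
      obtain j :: nat where j: "j > 0" "inverse (real j) < (H - \<beta>) / H"
        using ex_inverse_of_nat_less[of "(H - \<beta>) / H"] b H by auto
      have "1 / (real j + 2) \<le> inverse (real j)" using j by (simp add: field_simps)
      then have "1 / (real j + 2) \<le> (H - \<beta>) / H" using j by linarith
      then have "\<beta> \<le> bj j" unfolding bj_def using H by (simp add: field_simps)
      then show "holder_on {0..real N} \<beta> (\<lambda>t. Z t \<omega>)"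
        using holder_on_order[of 0 "real N" "bj j" "\<lambda>t. Z t \<omega>" \<beta>] elim b by auto
    qed
  qed
qed




lemma exp_lin_at_bot:
  fixes \<kappa> D :: real assumes k: "0 < \<kappa>"
  shows "((\<lambda>T. D * exp (\<kappa> * T)) \<longlongrightarrow> 0) at_bot"
proof -
  have "filterlim (\<lambda>T. \<kappa> * T) at_bot at_bot"
    by (rule filterlim_tendsto_pos_mult_at_bot[OF tendsto_const k filterlim_ident])
  then have "((\<lambda>T. exp (\<kappa> * T)) \<longlongrightarrow> 0) at_bot"
    by (rule filterlim_compose[OF exp_at_bot])
  then show ?thesis by (rule tendsto_mult_right_zero)
qed

lemma seq_at_bot: "filterlim (\<lambda>n::nat. R - real n) at_bot sequentially"
  unfolding filterlim_at_bot
proof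
  fix Z :: real
  show "\<forall>\<^sub>F n in sequentially. R - real n \<le> Z"
    unfolding eventually_sequentially
    by (intro exI[of _ "nat \<lceil>R - Z\<rceil>"]) linarith
qed

lemma conv_at_bot:
  fixes \<Phi> :: "real \<Rightarrow> real"
  assumes k: "0 < \<kappa>" and B: "\<And>T1 T2. T1 \<le> T2 \<Longrightarrow> T2 \<le> R \<Longrightarrow> \<bar>\<Phi> T1 - \<Phi> T2\<bar> \<le> D * exp (\<kappa> * T2)"
  shows "\<exists>L. (\<Phi> \<longlongrightarrow> L) at_bot"
proof -
  define u where "u = (\<lambda>n::nat. \<Phi> (R - real n))"
  have bt: "((\<lambda>n::nat. D * exp (\<kappa> * (R - real n))) \<longlongrightarrow> 0) sequentially"
    using filterlim_compose[OF exp_lin_at_bot[OF k, of D] seq_at_bot[of R]] by simp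
  have "Cauchy u"
  proof (rule metric_CauchyI)
    fix e :: real assume e: "e > 0"
    from bt e have "eventually (\<lambda>n. \<bar>D * exp (\<kappa> * (R - real n))\<bar> < e) sequentially"
      by (auto dest: order_tendstoD(2)[where a=e] tendstoD simp: dist_real_def)
    then obtain M where M: "\<And>n. n \<ge> M \<Longrightarrow> \<bar>D * exp (\<kappa> * (R - real n))\<bar> < e"
      unfolding eventually_sequentially by blast
    show "\<exists>M. \<forall>m\<ge>M. \<forall>n\<ge>M. dist (u m) (u n) < e"
    proof (intro exI[of _ M] allI impI)
      fix m n assume mn: "m \<ge> M" "n \<ge> M"
      show "dist (u m) (u n) < e"
      proof (cases "m \<le> n")
        case True
        have "\<bar>\<Phi> (R - real n) - \<Phi> (R - real m)\<bar> \<le> D * exp (\<kappa> * (R - real m))"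
          using True by (intro B) auto
        then show ?thesis using M[OF mn(1)] unfolding u_def dist_real_def by (simp add: abs_minus_commute)
      next
        case False
        have "\<bar>\<Phi> (R - real m) - \<Phi> (R - real n)\<bar> \<le> D * exp (\<kappa> * (R - real n))"
          using False by (intro B) auto
        then show ?thesis using M[OF mn(2)] unfolding u_def dist_real_def by simp
      qed
    qed
  qed
  then obtain L where L: "u \<longlonglongrightarrow> L" using Cauchy_convergent_iff convergent_def by blast
  have bound: "\<bar>\<Phi> T - L\<bar> \<le> D * exp (\<kappa> * T)" if T: "T \<le> R" for T
  proof -
    have "(\<lambda>n. \<bar>\<Phi> T - u n\<bar>) \<longlonglongrightarrow> \<bar>\<Phi> T - L\<bar>" by (intro tendsto_intros L)
    then show ?thesis
    proof (rule LIMSEQ_le_const2, intro exI[of _ "nat \<lceil>R - T\<rceil>"] allI impI)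
      fix n assume "nat \<lceil>R - T\<rceil> \<le> n"
      then have "R - real n \<le> T" by linarith
      then show "\<bar>\<Phi> T - u n\<bar> \<le> D * exp (\<kappa> * T)" unfolding u_def using T B[of "R - real n" T] by (simp add: abs_minus_commute)
    qed
  qed
  have "((\<lambda>T. \<Phi> T - L) \<longlongrightarrow> 0) at_bot"
  proof (rule Lim_null_comparison[OF _ exp_lin_at_bot[OF k, of D]])
    show "\<forall>\<^sub>F T in at_bot. norm (\<Phi> T - L) \<le> D * exp (\<kappa> * T)"
      unfolding eventually_at_bot_linorder using bound by auto
  qed
  then have "(\<Phi> \<longlongrightarrow> L) at_bot" by (simp add: LIM_zero_iff)
  then show ?thesis by blast
qed

definition good :: "real \<Rightarrow> (real \<Rightarrow> 'a \<Rightarrow> real) \<Rightarrow> 'a \<Rightarrow> bool" where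
  "good H Z \<omega> \<longleftrightarrow> Z 0 \<omega> = 0 \<and> (\<forall>\<beta>. 0 < \<beta> \<and> \<beta> < H \<longrightarrow> (\<forall>N::nat. holder_on {0..real N} \<beta> (\<lambda>t. Z t \<omega>)))
     \<and> continuous_on {0..} (\<lambda>t. Z t \<omega>)"

lemma AE_good:
  assumes Z: "continuous_fbm M H Z" and H: "0 < H"
  shows "AE \<omega> in M. good H Z \<omega>"
proof -
  have cz: "\<forall>\<omega>\<in>space M. continuous_on {0..} (\<lambda>t. Z t \<omega>)"
    using Z unfolding continuous_fbm_def by (rule conjunct2)
  show ?thesis
    using fbm_holder_all[OF Z H] AE_space
  proof eventually_elim
    case (elim \<omega>)
    then show ?case using cz unfolding good_def by simp
  qed
qed

lemma tc_eq: "time_change H s \<alpha> = (H / \<alpha>) * exp ((\<alpha> / H) * s)"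
  unfolding time_change_def by (simp add: field_simps)

lemma tc_nonneg: "0 < H \<Longrightarrow> 0 < \<alpha> \<Longrightarrow> 0 \<le> time_change H s \<alpha>"
  unfolding time_change_def by simp

lemma tc_mono: "0 < H \<Longrightarrow> 0 < \<alpha> \<Longrightarrow> s \<le> t \<Longrightarrow> time_change H s \<alpha> \<le> time_change H t \<alpha>"
proof -
  assume H: "0 < H" and a: "0 < \<alpha>" and st: "s \<le> t"
  have "(\<alpha> / H) * s \<le> (\<alpha> / H) * t" using H a st by (intro mult_left_mono) auto
  then have "exp ((\<alpha> / H) * s) \<le> exp ((\<alpha> / H) * t)" by simp
  then show ?thesis unfolding tc_eq using H a by (intro mult_left_mono) auto
qed

lemma g_cont:
  assumes c: "continuous_on {0..} (\<lambda>t. Z t \<omega>)" and H: "0 < H" and a: "0 < \<alpha>"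
  shows "continuous_on S (\<lambda>s. Z (time_change H s \<alpha>) \<omega>)"
proof (rule continuous_on_compose2[OF c])
  show "continuous_on S (\<lambda>s. time_change H s \<alpha>)" unfolding time_change_def
    by (intro continuous_intros) (use a H in auto)
  show "(\<lambda>s. time_change H s \<alpha>) ` S \<subseteq> {0..}" using tc_nonneg[OF H a] by auto
qed

lemma g_holder:
  assumes g: "good H Z \<omega>" and H: "0 < H" and a: "0 < \<alpha>" and b: "0 < \<beta>" "\<beta> < H" and AB: "A \<le> B"
  shows "holder_on {A..B} \<beta> (\<lambda>s. Z (time_change H s \<alpha>) \<omega>)"
proof -
  define N where "N = nat \<lceil>time_change H B \<alpha>\<rceil>"
  have F: "holder_on {0..real N} \<beta> (\<lambda>t. Z t \<omega>)" using g b unfolding good_def by blast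
  obtain L where L: "L \<ge> 0" "\<forall>s\<in>{A..B}. \<forall>t\<in>{A..B}. \<bar>exp ((\<alpha> / H) * s) - exp ((\<alpha> / H) * t)\<bar> \<le> L * \<bar>s - t\<bar>"
    using exp_lipschitz[where c="\<alpha> / H" and A=A and B=B] by blast
  show ?thesis
  proof (rule holder_on_compose[OF F _ _ _, where L="H / \<alpha> * L"])
    show "0 \<le> \<beta>" using b by simp
    show "0 \<le> H / \<alpha> * L" using H a L by simp
    fix t assume t: "t \<in> {A..B}"
    have "time_change H t \<alpha> \<le> time_change H B \<alpha>" using t by (intro tc_mono H a) auto
    also have "\<dots> \<le> real N" unfolding N_def by linarith
    finally show "time_change H t \<alpha> \<in> {0..real N}" using tc_nonneg[OF H a] by auto
  next
    fix s t assume st: "s \<in> {A..B}" "t \<in> {A..B}"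
    have "time_change H s \<alpha> - time_change H t \<alpha> = H / \<alpha> * (exp ((\<alpha> / H) * s) - exp ((\<alpha> / H) * t))"
      unfolding tc_eq by (simp only: right_diff_distrib)
    then have "\<bar>time_change H s \<alpha> - time_change H t \<alpha>\<bar> = H / \<alpha> * \<bar>exp ((\<alpha> / H) * s) - exp ((\<alpha> / H) * t)\<bar>"
      using H a by (simp add: abs_mult)
    also have "\<dots> \<le> H / \<alpha> * (L * \<bar>s - t\<bar>)" using L st H a by (intro mult_left_mono) auto
    finally show "\<bar>time_change H s \<alpha> - time_change H t \<alpha>\<bar> \<le> H / \<alpha> * L * \<bar>s - t\<bar>" by (simp add: mult.assoc)
  qed
qed

lemma Y_part:
  assumes g: "good H Z \<omega>" and H: "0 < H" "H < 1" and a: "0 < \<alpha>" and b: "0 < \<beta>" "\<beta> < H"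
  shows "locally_holder_on {0..} \<beta> (\<lambda>t. Y_proc H Z \<alpha> t \<omega>)"
  unfolding locally_holder_on_def
proof (intro allI)
  fix a b :: real
  define B where "B = max b 0"
  have c: "continuous_on {0..B} (\<lambda>s. Z (time_change H s \<alpha>) \<omega>)"
  proof -
    have "continuous_on {0..} (\<lambda>t. Z t \<omega>)" using g unfolding good_def by (elim conjE)
    then show ?thesis by (rule g_cont[OF _ H(1) a])
  qed
  have "holder_on {0..B} \<beta> (\<lambda>t. RS_integral (\<lambda>s. exp ((- \<alpha>) * s)) (\<lambda>s. Z (time_change H s \<alpha>) \<omega>) 0 t)"
    by (rule RS_holder[OF _ c g_holder[OF g H(1) a b]]) (use b H B_def in auto)
  then obtain C where C: "\<And>s t. s \<in> {0..B} \<Longrightarrow> t \<in> {0..B} \<Longrightarrow>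
      \<bar>RS_integral (\<lambda>s. exp ((- \<alpha>) * s)) (\<lambda>s. Z (time_change H s \<alpha>) \<omega>) 0 s -
       RS_integral (\<lambda>s. exp ((- \<alpha>) * s)) (\<lambda>s. Z (time_change H s \<alpha>) \<omega>) 0 t\<bar> \<le> C * \<bar>s - t\<bar> powr \<beta>"
    unfolding holder_on_def by blast
  show "\<exists>C. \<forall>s\<in>{0..} \<inter> {a..b}. \<forall>t\<in>{0..} \<inter> {a..b}. \<bar>Y_proc H Z \<alpha> s \<omega> - Y_proc H Z \<alpha> t \<omega>\<bar> \<le> C * \<bar>s - t\<bar> powr \<beta>"
  proof (intro exI[of _ C] ballI)
    fix s t assume s: "s \<in> {0..} \<inter> {a..b}" and t: "t \<in> {0..} \<inter> {a..b}"
    have st: "s \<in> {0..B}" "t \<in> {0..B}" using s t unfolding B_def by auto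
    show "\<bar>Y_proc H Z \<alpha> s \<omega> - Y_proc H Z \<alpha> t \<omega>\<bar> \<le> C * \<bar>s - t\<bar> powr \<beta>"
      unfolding Y_proc_def by (rule C[OF st])
  qed
qed

lemma exp_powr_real: "exp (y::real) powr (a::real) = exp (a * y)"
  by (simp add: powr_def)

lemma U_part:
  assumes g: "good H Z \<omega>" and H: "0 < H" "H < 1" and \<gamma>: "0 < \<gamma>"
  shows "(\<forall>t. \<exists>L. ((\<lambda>T. U_partial H Z \<gamma> T t \<omega>) \<longlongrightarrow> L) at_bot) \<and>
         (\<forall>\<beta>. 0 < \<beta> \<and> \<beta> < H \<longrightarrow> locally_holder_on UNIV \<beta> (\<lambda>t. U_proc H Z \<gamma> t \<omega>))"
proof -
  define c where "c = \<gamma> - 1"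
  define gg where "gg = (\<lambda>s. Z (time_change H s 1) \<omega>)"
  define h where "h = (\<lambda>u. gg u * (c * exp (c*u)))"
  have zc: "continuous_on {0..} (\<lambda>t. Z t \<omega>)" using g unfolding good_def by (elim conjE)
  have Z0: "Z 0 \<omega> = 0" using g unfolding good_def by (elim conjE)
  have ggc: "continuous_on S gg" for S unfolding gg_def by (rule g_cont[where Z=Z and \<omega>=\<omega>, OF zc H(1)]) simp
  have hc: "continuous_on S h" for S unfolding h_def by (intro continuous_intros ggc)
  have hi: "h integrable_on {x..y}" for x y by (rule integrable_continuous_interval[OF hc])
  define \<beta>0 where "\<beta>0 = H * (1 - min \<gamma> 1 / 2)"
  have b0: "0 < \<beta>0" "\<beta>0 < H" unfolding \<beta>0_def using H \<gamma> by (auto simp: min_def)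
  define \<kappa> where "\<kappa> = c + \<beta>0 / H"
  have \<kappa>: "0 < \<kappa>"
  proof -
    have "\<beta>0 / H = 1 - min \<gamma> 1 / 2" unfolding \<beta>0_def using H by simp
    then show ?thesis unfolding \<kappa>_def c_def using \<gamma> by (auto simp: min_def)
  qed
  have "holder_on {0..real (1::nat)} \<beta>0 (\<lambda>t. Z t \<omega>)" using g b0 unfolding good_def by blast
  then obtain C0 where C0: "C0 \<ge> 0" "\<And>s t. s \<in> {0..1} \<Longrightarrow> t \<in> {0..1} \<Longrightarrow> \<bar>Z s \<omega> - Z t \<omega>\<bar> \<le> C0 * \<bar>s - t\<bar> powr \<beta>0"
    unfolding holder_on_def by auto
  define D where "D = C0 * H powr \<beta>0 * \<bar>c\<bar>"
  have D0: "0 \<le> D" unfolding D_def using C0 by simp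
  have gbound: "\<bar>gg s\<bar> \<le> C0 * H powr \<beta>0 * exp ((\<beta>0 / H) * s)" if s: "s \<le> 0" for s
  proof -
    define u where "u = H * exp (s / H)"
    have tc: "time_change H s 1 = u" unfolding u_def time_change_def by simp
    have e1: "exp (s / H) \<le> 1" using s H by (simp add: divide_nonpos_pos)
    have u: "0 \<le> u" "u \<le> 1" unfolding u_def using e1 H
      by (auto intro: order_trans[OF mult_left_le_one_le] simp: mult_le_one)
    have "\<bar>gg s\<bar> = \<bar>Z u \<omega> - Z 0 \<omega>\<bar>" unfolding gg_def tc Z0 by simp
    also have "\<dots> \<le> C0 * \<bar>u - 0\<bar> powr \<beta>0" using C0(2)[of u 0] u by simp
    also have "\<bar>u - 0\<bar> powr \<beta>0 = H powr \<beta>0 * exp ((\<beta>0 / H) * s)"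
      unfolding u_def using H by (simp add: powr_mult exp_powr_real)
    finally show ?thesis by (simp add: mult.assoc)
  qed
  have hbound: "\<bar>h s\<bar> \<le> D * exp (\<kappa> * s)" if s: "s \<le> 0" for s
  proof -
    have "\<bar>h s\<bar> = \<bar>gg s\<bar> * (\<bar>c\<bar> * exp (c * s))" unfolding h_def by (simp add: abs_mult)
    also have "\<dots> \<le> (C0 * H powr \<beta>0 * exp ((\<beta>0 / H) * s)) * (\<bar>c\<bar> * exp (c * s))"
      by (intro mult_right_mono gbound s) simp
    also have "\<dots> = D * (exp ((\<beta>0 / H) * s) * exp (c * s))" unfolding D_def by (simp add: mult_ac)
    also have "exp ((\<beta>0 / H) * s) * exp (c * s) = exp (\<kappa> * s)" unfolding \<kappa>_def
      by (simp add: exp_add[symmetric] algebra_simps)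
    finally show ?thesis .
  qed
  have Phib: "\<bar>integral {T1..t} h - integral {T2..t} h\<bar> \<le> D / \<kappa> * exp (\<kappa> * T2)"
    if T: "T1 \<le> T2" "T2 \<le> min t 0" for t T1 T2
  proof -
    have "integral {T1..T2} h + integral {T2..t} h = integral {T1..t} h"
      using Henstock_Kurzweil_Integration.integral_combine[OF T(1) _ hi, of t] T by simp
    then have eq: "integral {T1..t} h - integral {T2..t} h = integral {T1..T2} h" by simp
    have hint: "((\<lambda>u. D / \<kappa> * (\<kappa> * exp (\<kappa> * u))) has_integral D / \<kappa> * (exp (\<kappa> * T2) - exp (\<kappa> * T1))) {T1..T2}"
      by (intro has_integral_mult_right ftc_exp T(1))
    have fe: "(\<lambda>u. D / \<kappa> * (\<kappa> * exp (\<kappa> * u))) = (\<lambda>u. D * exp (\<kappa> * u))" using \<kappa> by (simp add: fun_eq_iff)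
    have "norm (integral {T1..T2} h) \<le> integral {T1..T2} (\<lambda>u. D * exp (\<kappa> * u))"
    proof (rule integral_norm_bound_integral[OF hi])
      show "(\<lambda>u. D * exp (\<kappa> * u)) integrable_on {T1..T2}" using hint fe by (auto simp: integrable_on_def)
      fix u assume "u \<in> {T1..T2}"
      then have "u \<le> 0" using T by auto
      then show "norm (h u) \<le> D * exp (\<kappa> * u)" using hbound by simp
    qed
    also have "integral {T1..T2} (\<lambda>u. D * exp (\<kappa> * u)) = D / \<kappa> * (exp (\<kappa> * T2) - exp (\<kappa> * T1))"
      using integral_unique[OF hint] fe by simp
    also have "\<dots> \<le> D / \<kappa> * exp (\<kappa> * T2)" using D0 \<kappa> by (intro mult_left_mono) auto
    finally show ?thesis unfolding eq by simp
  qed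
  have "\<forall>t. \<exists>L. ((\<lambda>T. integral {T..t} h) \<longlongrightarrow> L) at_bot"
  proof
    fix t show "\<exists>L. ((\<lambda>T. integral {T..t} h) \<longlongrightarrow> L) at_bot"
      by (rule conv_at_bot[OF \<kappa>, where R="min t 0" and D="D / \<kappa>"]) (rule Phib)
  qed
  then obtain L\<Phi> where L\<Phi>: "\<And>t. ((\<lambda>T. integral {T..t} h) \<longlongrightarrow> L\<Phi> t) at_bot" by metis
  have tail0: "((\<lambda>T. exp (c*T) * gg T) \<longlongrightarrow> 0) at_bot"
  proof (rule Lim_null_comparison[OF _ exp_lin_at_bot[OF \<kappa>, of "C0 * H powr \<beta>0"]])
    show "\<forall>\<^sub>F T in at_bot. norm (exp (c*T) * gg T) \<le> C0 * H powr \<beta>0 * exp (\<kappa> * T)"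
      unfolding eventually_at_bot_linorder
    proof (intro exI[of _ 0] allI impI)
      fix T :: real assume T: "T \<le> 0"
      have "norm (exp (c*T) * gg T) = exp (c*T) * \<bar>gg T\<bar>" by (simp add: abs_mult)
      also have "\<dots> \<le> exp (c*T) * (C0 * H powr \<beta>0 * exp ((\<beta>0 / H) * T))"
        by (intro mult_left_mono gbound T) simp
      also have "\<dots> = C0 * H powr \<beta>0 * (exp (c*T) * exp ((\<beta>0 / H) * T))" by (simp add: mult_ac)
      also have "exp (c*T) * exp ((\<beta>0 / H) * T) = exp (\<kappa> * T)" unfolding \<kappa>_def
        by (simp add: exp_add[symmetric] algebra_simps)
      finally show "norm (exp (c*T) * gg T) \<le> C0 * H powr \<beta>0 * exp (\<kappa> * T)" .
    qed
  qed
  have Ueq: "U_partial H Z \<gamma> T t \<omega> = exp (c*t) * gg t - exp (c*T) * gg T - integral {T..t} h"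
    if "T \<le> t" for T t
    unfolding U_partial_def gg_def[symmetric] h_def c_def using that ggc by (rule RS_integral_exp)
  have Ulim: "((\<lambda>T. U_partial H Z \<gamma> T t \<omega>) \<longlongrightarrow> exp (c*t) * gg t - 0 - L\<Phi> t) at_bot" for t
  proof -
    have "((\<lambda>T. exp (c*t) * gg t - exp (c*T) * gg T - integral {T..t} h) \<longlongrightarrow> exp (c*t) * gg t - 0 - L\<Phi> t) at_bot"
      by (intro tendsto_diff tendsto_const tail0 L\<Phi>)
    moreover have "\<forall>\<^sub>F T in at_bot. exp (c*t) * gg t - exp (c*T) * gg T - integral {T..t} h = U_partial H Z \<gamma> T t \<omega>"
      unfolding eventually_at_bot_linorder by (intro exI[of _ t] allI impI) (simp add: Ueq)
    ultimately show ?thesis by (rule tendsto_cong[THEN iffD1, rotated])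
  qed
  have part1: "\<forall>t. \<exists>L. ((\<lambda>T. U_partial H Z \<gamma> T t \<omega>) \<longlongrightarrow> L) at_bot" using Ulim by blast
  have Lim_eq: "Lim at_bot (\<lambda>T. U_partial H Z \<gamma> T t \<omega>) = exp (c*t) * gg t - L\<Phi> t" for t
    using tendsto_Lim[OF trivial_limit_at_bot_linorder Ulim[of t]] by simp
  have L\<Phi>_add: "L\<Phi> t = L\<Phi> A + integral {A..t} h" if At: "A \<le> t" for A t
  proof -
    have "((\<lambda>T. integral {T..A} h + integral {A..t} h) \<longlongrightarrow> L\<Phi> A + integral {A..t} h) at_bot"
      by (intro tendsto_add L\<Phi> tendsto_const)
    moreover have "\<forall>\<^sub>F T in at_bot. integral {T..A} h + integral {A..t} h = integral {T..t} h"
      unfolding eventually_at_bot_linorder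
    proof (intro exI[of _ A] allI impI)
      fix T assume "T \<le> A"
      then show "integral {T..A} h + integral {A..t} h = integral {T..t} h"
        using Henstock_Kurzweil_Integration.integral_combine[OF _ At hi, of T] by simp
    qed
    ultimately have "((\<lambda>T. integral {T..t} h) \<longlongrightarrow> L\<Phi> A + integral {A..t} h) at_bot"
      by (rule tendsto_cong[THEN iffD1, rotated])
    then show ?thesis using tendsto_unique[OF trivial_limit_at_bot_linorder L\<Phi>[of t]] by simp
  qed
  have part2: "locally_holder_on UNIV \<beta> (\<lambda>t. U_proc H Z \<gamma> t \<omega>)" if b: "0 < \<beta>" "\<beta> < H" for \<beta>
    unfolding locally_holder_on_def
  proof (intro allI)
    fix a b :: real
    show "\<exists>C. \<forall>s\<in>UNIV \<inter> {a..b}. \<forall>t\<in>UNIV \<inter> {a..b}. \<bar>U_proc H Z \<gamma> s \<omega> - U_proc H Z \<gamma> t \<omega>\<bar> \<le> C * \<bar>s - t\<bar> powr \<beta>"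
    proof (cases "a \<le> b")
      case False
      then show ?thesis by (intro exI[of _ 0]) auto
    next
      case ab: True
      define K0 where "K0 = exp (c*a) * gg a - L\<Phi> a"
      have RSh: "holder_on {a..b} \<beta> (\<lambda>t. RS_integral (\<lambda>s. exp (c * s)) gg a t)"
        by (rule RS_holder[OF ab ggc]) (use g_holder[OF g H(1) zero_less_one b ab] b H in \<open>auto simp: gg_def\<close>)
      have Hh: "holder_on {a..b} \<beta> (\<lambda>t. exp ((- \<gamma>) * t) * (RS_integral (\<lambda>s. exp (c * s)) gg a t + K0))"
        by (intro holder_on_mult exp_holder holder_on_add RSh holder_on_const) (use b H in auto)
      have "holder_on {a..b} \<beta> (\<lambda>t. U_proc H Z \<gamma> t \<omega>)"
      proof (rule holder_on_cong[OF Hh])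
        fix t assume t: "t \<in> {a..b}"
        have "RS_integral (\<lambda>s. exp (c * s)) gg a t = exp (c*t) * gg t - exp (c*a) * gg a - integral {a..t} h"
          unfolding h_def using t ggc by (intro RS_integral_exp) auto
        moreover have "L\<Phi> t = L\<Phi> a + integral {a..t} h" using t by (intro L\<Phi>_add) auto
        ultimately show "U_proc H Z \<gamma> t \<omega> = exp ((- \<gamma>) * t) * (RS_integral (\<lambda>s. exp (c * s)) gg a t + K0)"
          unfolding U_proc_def Lim_eq K0_def by simp
      qed
      then obtain C where C: "\<And>s t. s \<in> {a..b} \<Longrightarrow> t \<in> {a..b} \<Longrightarrow> \<bar>U_proc H Z \<gamma> s \<omega> - U_proc H Z \<gamma> t \<omega>\<bar> \<le> C * \<bar>s - t\<bar> powr \<beta>"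
        unfolding holder_on_def by blast
      show ?thesis by (intro exI[of _ C] ballI) (rule C; simp)
    qed
  qed
  show ?thesis using part1 part2 by blast
qed



theorem proposition3p3:
  fixes M :: "'a measure" and H :: real and Z :: "real \<Rightarrow> 'a \<Rightarrow> real"
  assumes H: "0 < H" "H < 1"
    and Z: "continuous_fbm M H Z"
  shows "(\<forall>\<alpha>>0. AE \<omega> in M. \<forall>\<beta>. 0 < \<beta> \<and> \<beta> < H \<longrightarrow>
            locally_holder_on {0..} \<beta> (\<lambda>t. Y_proc H Z \<alpha> t \<omega>))
       \<and> (\<forall>\<gamma>>0. AE \<omega> in M.
            (\<forall>t. \<exists>L. ((\<lambda>T. U_partial H Z \<gamma> T t \<omega>) \<longlongrightarrow> L) at_bot) \<and>
            (\<forall>\<beta>. 0 < \<beta> \<and> \<beta> < H \<longrightarrow> locally_holder_on UNIV \<beta> (\<lambda>t. U_proc H Z \<gamma> t \<omega>)))"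
proof -
  have G: "AE \<omega> in M. good H Z \<omega>" by (rule AE_good[OF Z H(1)])
  have P1: "AE \<omega> in M. \<forall>\<beta>. 0 < \<beta> \<and> \<beta> < H \<longrightarrow> locally_holder_on {0..} \<beta> (\<lambda>t. Y_proc H Z \<alpha> t \<omega>)"
    if a: "\<alpha> > 0" for \<alpha>
    using G
  proof eventually_elim
    case (elim \<omega>)
    show ?case
    proof (intro allI impI)
      fix \<beta> :: real assume b: "0 < \<beta> \<and> \<beta> < H"
      show "locally_holder_on {0..} \<beta> (\<lambda>t. Y_proc H Z \<alpha> t \<omega>)"
        using Y_part[OF elim H a] b by blast
    qed
  qed
  have P2: "AE \<omega> in M. (\<forall>t. \<exists>L. ((\<lambda>T. U_partial H Z \<gamma> T t \<omega>) \<longlongrightarrow> L) at_bot) \<and>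
            (\<forall>\<beta>. 0 < \<beta> \<and> \<beta> < H \<longrightarrow> locally_holder_on UNIV \<beta> (\<lambda>t. U_proc H Z \<gamma> t \<omega>))"
    if g: "\<gamma> > 0" for \<gamma>
    using G
  proof eventually_elim
    case (elim \<omega>)
    show ?case by (rule U_part[OF elim H g])
  qed
  show ?thesis using P1 P2 by blast
qed

end
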